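(* Let $G$ be the central product of normal subgroups $H,K$ ($G=HK$, $[H,K]=1$), $A=H\cap K$, $Z=H'\cap K'$, and $D$ a divisible abelian group with trivial action. Let $L$ be the kernel of the inflation map $\operatorname{H}^2(H/A,D)\to\operatorname{H}^2(H/Z,D)$ and $M$ the kernel of the inflation map $\operatorname{H}^2(K/A,D)\to\operatorname{H}^2(K/Z,D)$ (so $L\cong\operatorname{Hom}((A\cap H')/Z,D)$ and $M\cong\operatorname{Hom}((A\cap K')/Z,D)$). Then $\operatorname{Hom}(Z,D)$ embeds in $\operatorname{H}^2(H/A,D)/L\oplus\operatorname{H}^2(K/A,D)/M$.
   Context: $X'$ is the commutator subgroup of $X$; $\operatorname{H}^2(X,D)$ is second cohomology with trivial coefficients. *)

theory Defs
  imports "HOL-Algebra.Algebra"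
begin

text \<open>Second cohomology with trivial coefficients, via normalised-free (inhomogeneous)
  2-cochains. The abelian group D is written multiplicatively (HOL-Algebra convention).\<close>

definition cochain2 :: "('q, 'm) monoid_scheme \<Rightarrow> ('d, 'n) monoid_scheme \<Rightarrow> ('q \<times> 'q \<Rightarrow> 'd) monoid" where
  "cochain2 Q D =
     \<lparr> carrier = carrier Q \<times> carrier Q \<rightarrow>\<^sub>E carrier D,
       monoid.mult = (\<lambda>f g. \<lambda>p\<in>carrier Q \<times> carrier Q. f p \<otimes>\<^bsub>D\<^esub> g p),
       monoid.one = (\<lambda>p\<in>carrier Q \<times> carrier Q. \<one>\<^bsub>D\<^esub>) \<rparr>"

definition cocycles2 :: "('q, 'm) monoid_scheme \<Rightarrow> ('d, 'n) monoid_scheme \<Rightarrow> ('q \<times> 'q \<Rightarrow> 'd) set" where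
  "cocycles2 Q D = {f \<in> carrier (cochain2 Q D).
     \<forall>x\<in>carrier Q. \<forall>y\<in>carrier Q. \<forall>z\<in>carrier Q.
       f (y, z) \<otimes>\<^bsub>D\<^esub> f (x, y \<otimes>\<^bsub>Q\<^esub> z) = f (x \<otimes>\<^bsub>Q\<^esub> y, z) \<otimes>\<^bsub>D\<^esub> f (x, y)}"

definition coboundaries2 :: "('q, 'm) monoid_scheme \<Rightarrow> ('d, 'n) monoid_scheme \<Rightarrow> ('q \<times> 'q \<Rightarrow> 'd) set" where
  "coboundaries2 Q D = {(\<lambda>p\<in>carrier Q \<times> carrier Q.
       g (fst p) \<otimes>\<^bsub>D\<^esub> g (snd p) \<otimes>\<^bsub>D\<^esub> inv\<^bsub>D\<^esub> (g (fst p \<otimes>\<^bsub>Q\<^esub> snd p))) | g. g \<in> carrier Q \<rightarrow> carrier D}"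

definition H2 :: "('q, 'm) monoid_scheme \<Rightarrow> ('d, 'n) monoid_scheme \<Rightarrow> (('q \<times> 'q \<Rightarrow> 'd) set) monoid" where
  "H2 Q D = (cochain2 Q D \<lparr>carrier := cocycles2 Q D\<rparr>) Mod coboundaries2 Q D"

definition inflation :: "('q1 \<Rightarrow> 'q2) \<Rightarrow> ('q1, 'm) monoid_scheme \<Rightarrow> ('d, 'n) monoid_scheme
    \<Rightarrow> ('q2 \<times> 'q2 \<Rightarrow> 'd) set \<Rightarrow> ('q1 \<times> 'q1 \<Rightarrow> 'd) set" where
  "inflation phi Q1 D c =
     coboundaries2 Q1 D <#>\<^bsub>cochain2 Q1 D\<^esub>
       ((\<lambda>f. \<lambda>p\<in>carrier Q1 \<times> carrier Q1. f (phi (fst p), phi (snd p))) ` c)"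

definition divisible_group :: "('d, 'n) monoid_scheme \<Rightarrow> bool" where
  "divisible_group D \<longleftrightarrow> (\<forall>x\<in>carrier D. \<forall>n::nat. n > 0 \<longrightarrow> (\<exists>y\<in>carrier D. y [^]\<^bsub>D\<^esub> n = x))"

definition Hom_grp :: "('a, 'm) monoid_scheme \<Rightarrow> 'a set \<Rightarrow> ('d, 'n) monoid_scheme \<Rightarrow> ('a \<Rightarrow> 'd) monoid" where
  "Hom_grp G S D =
     \<lparr> carrier = hom (G\<lparr>carrier := S\<rparr>) D \<inter> extensional S,
       monoid.mult = (\<lambda>f g. \<lambda>x\<in>S. f x \<otimes>\<^bsub>D\<^esub> g x),
       monoid.one = (\<lambda>x\<in>S. \<one>\<^bsub>D\<^esub>) \<rparr>"

text \<open>The quotient map H/Z \<rightarrow> H/A for Z \<subseteq> A: coset C \<mapsto> A C.\<close>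
definition coset_proj :: "('a, 'm) monoid_scheme \<Rightarrow> 'a set \<Rightarrow> 'a set \<Rightarrow> 'a set" where
  "coset_proj G A C = A <#>\<^bsub>G\<^esub> C"

definition infl_kernel :: "('a, 'm) monoid_scheme \<Rightarrow> 'a set \<Rightarrow> 'a set \<Rightarrow> 'a set \<Rightarrow> ('d, 'n) monoid_scheme
   \<Rightarrow> (('a set \<times> 'a set \<Rightarrow> 'd) set) set" where
  "infl_kernel G S A Z D =
     {c \<in> carrier (H2 (G\<lparr>carrier := S\<rparr> Mod A) D).
        inflation (coset_proj G A) (G\<lparr>carrier := S\<rparr> Mod Z) D c
          = \<one>\<^bsub>H2 (G\<lparr>carrier := S\<rparr> Mod Z) D\<^esub>}"

end

theory Submission
  imports Defs
begin

lemma hom_restrict_int_pow: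
  assumes W: "group W" and D: "group D" and B: "subgroup B W" and psi: "psi \<in> hom (W\<lparr>carrier:=B\<rparr>) D"
    and y: "y \<in> B"
  shows "psi (y [^]\<^bsub>W\<^esub> (k::int)) = psi y [^]\<^bsub>D\<^esub> k"
proof -
  interpret W: group W by fact
  have "psi (y [^]\<^bsub>W\<lparr>carrier:=B\<rparr>\<^esub> k) = psi y [^]\<^bsub>D\<^esub> k"
    using hom_int_pow[OF psi _ W.subgroup_imp_group[OF B] D] y by simp
  thus ?thesis using W.int_pow_consistent[OF B y] by simp
qed

lemma ext_step_d:
  assumes W: "comm_group W" and D: "comm_group D" "divisible_group D"
    and B: "subgroup B W" and psi: "psi \<in> hom (W\<lparr>carrier:=B\<rparr>) D"
    and x: "x \<in> carrier W"
  shows "\<exists>d\<in>carrier D. \<forall>k::int. x [^]\<^bsub>W\<^esub> k \<in> B \<longrightarrow> d [^]\<^bsub>D\<^esub> k = psi (x [^]\<^bsub>W\<^esub> k)"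
proof -
  interpret W: comm_group W by fact
  interpret D: comm_group D by fact
  have psiB: "\<And>b. b \<in> B \<Longrightarrow> psi b \<in> carrier D" using psi by (auto simp: hom_def)
  show ?thesis
  proof (cases "\<exists>n::nat. n > 0 \<and> x [^]\<^bsub>W\<^esub> n \<in> B")
    case False
    have "\<forall>k::int. x [^]\<^bsub>W\<^esub> k \<in> B \<longrightarrow> \<one>\<^bsub>D\<^esub> [^]\<^bsub>D\<^esub> k = psi (x [^]\<^bsub>W\<^esub> k)"
    proof (intro allI impI)
      fix k :: int assume k: "x [^]\<^bsub>W\<^esub> k \<in> B"
      have "k = 0"
      proof (rule ccontr)
        assume "k \<noteq> 0"
        show False
        proof (cases "k > 0")
          case True
          then have "k = int (nat k)" by simp
          then have "x [^]\<^bsub>W\<^esub> (nat k) \<in> B" using k int_pow_int[of W x "nat k"] by metis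
          moreover have "nat k > 0" using True by simp
          ultimately show False using False by blast
        next
          case False2: False
          then have "k = - int (nat (-k))" by simp
          then have "inv\<^bsub>W\<^esub> (x [^]\<^bsub>W\<^esub> (nat (-k))) \<in> B" using k W.int_pow_neg_int[OF x, of "nat (-k)"] by metis
          then have "inv\<^bsub>W\<^esub> (inv\<^bsub>W\<^esub> (x [^]\<^bsub>W\<^esub> (nat (-k)))) \<in> B"
            using subgroup.m_inv_closed[OF B] by blast
          then have "x [^]\<^bsub>W\<^esub> (nat (-k)) \<in> B" using x by simp
          moreover have "nat (-k) > 0" using False2 \<open>k \<noteq> 0\<close> by simp
          ultimately show False using False by blast
        qed
      qed
      moreover have "psi \<one>\<^bsub>W\<^esub> = \<one>\<^bsub>D\<^esub>"
        using hom_one[OF psi W.subgroup_imp_group[OF B] D.is_group] by simp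
      ultimately show "\<one>\<^bsub>D\<^esub> [^]\<^bsub>D\<^esub> k = psi (x [^]\<^bsub>W\<^esub> k)"
        by simp
    qed
    then show ?thesis by blast
  next
    case True
    define n where "n = (LEAST n::nat. n > 0 \<and> x [^]\<^bsub>W\<^esub> n \<in> B)"
    have n: "n > 0" "x [^]\<^bsub>W\<^esub> n \<in> B" using LeastI_ex[OF True] unfolding n_def by auto
    have nmin: "\<And>m::nat. 0 < m \<Longrightarrow> m < n \<Longrightarrow> x [^]\<^bsub>W\<^esub> m \<notin> B"
      unfolding n_def using not_less_Least by blast
    obtain d where d: "d \<in> carrier D" "d [^]\<^bsub>D\<^esub> n = psi (x [^]\<^bsub>W\<^esub> n)"
      using assms(3) psiB[OF n(2)] n(1) unfolding divisible_group_def by blast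
    have "\<forall>k::int. x [^]\<^bsub>W\<^esub> k \<in> B \<longrightarrow> d [^]\<^bsub>D\<^esub> k = psi (x [^]\<^bsub>W\<^esub> k)"
    proof (intro allI impI)
      fix k :: int assume k: "x [^]\<^bsub>W\<^esub> k \<in> B"
      define q where "q = k div int n"
      define r where "r = k mod int n"
      have kqr: "k = int n * q + r" unfolding q_def r_def by simp
      have r: "0 \<le> r" "r < int n" unfolding r_def using n(1) by auto
      have xn: "x [^]\<^bsub>W\<^esub> (int n) \<in> B" using n(2) by (simp add: int_pow_int)
      have e: "x [^]\<^bsub>W\<^esub> k = x [^]\<^bsub>W\<^esub> r \<otimes>\<^bsub>W\<^esub> x [^]\<^bsub>W\<^esub> (int n * q)"
        using x by (simp add: kqr W.int_pow_mult W.m_comm)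
      have "x [^]\<^bsub>W\<^esub> r = x [^]\<^bsub>W\<^esub> k \<otimes>\<^bsub>W\<^esub> inv\<^bsub>W\<^esub> ((x [^]\<^bsub>W\<^esub> (int n)) [^]\<^bsub>W\<^esub> q)"
        using x by (simp add: W.int_pow_pow e W.m_assoc)
      also have "\<dots> \<in> B"
        by (rule subgroup.m_closed[OF B k subgroup.m_inv_closed[OF B W.subgroup_int_pow_closed[OF B xn]]])
      moreover have "r = int (nat r)" using r by simp
      ultimately have xr: "x [^]\<^bsub>W\<^esub> (nat r) \<in> B" using int_pow_int[of W x "nat r"] by metis
      have "r = 0"
      proof (rule ccontr)
        assume "r \<noteq> 0"
        then show False using nmin[of "nat r"] xr r by auto
      qed
      then have kq: "k = int n * q" using kqr by simp
      have "d [^]\<^bsub>D\<^esub> k = (d [^]\<^bsub>D\<^esub> (int n)) [^]\<^bsub>D\<^esub> q" using d(1) kq by (simp add: D.int_pow_pow)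
      also have "\<dots> = psi (x [^]\<^bsub>W\<^esub> (int n)) [^]\<^bsub>D\<^esub> q" using d(2) by (simp add: int_pow_int int_pow_int)
      also have "\<dots> = psi ((x [^]\<^bsub>W\<^esub> (int n)) [^]\<^bsub>W\<^esub> q)"
        using hom_restrict_int_pow[OF W.is_group D.is_group B psi xn] by simp
      also have "\<dots> = psi (x [^]\<^bsub>W\<^esub> k)" using x kq by (simp add: W.int_pow_pow)
      finally show "d [^]\<^bsub>D\<^esub> k = psi (x [^]\<^bsub>W\<^esub> k)" .
    qed
    then show ?thesis using d(1) by blast
  qed
qed


lemma hom_restr:
  assumes W: "group W" and D: "group D" and B: "subgroup B W" and psi: "psi \<in> hom (W\<lparr>carrier:=B\<rparr>) D"
  shows "\<And>a. a \<in> B \<Longrightarrow> psi a \<in> carrier D"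
    and "\<And>a b. a \<in> B \<Longrightarrow> b \<in> B \<Longrightarrow> psi (a \<otimes>\<^bsub>W\<^esub> b) = psi a \<otimes>\<^bsub>D\<^esub> psi b"
    and "psi \<one>\<^bsub>W\<^esub> = \<one>\<^bsub>D\<^esub>"
    and "\<And>a. a \<in> B \<Longrightarrow> psi (inv\<^bsub>W\<^esub> a) = inv\<^bsub>D\<^esub> psi a"
proof -
  interpret W: group W by fact
  interpret D: group D by fact
  interpret h: group_hom "W\<lparr>carrier:=B\<rparr>" D psi
    using W.subgroup_imp_group[OF B] psi by (simp add: group_hom_def group_hom_axioms_def D.is_group)
  show "\<And>a. a \<in> B \<Longrightarrow> psi a \<in> carrier D" using psi by (auto simp: hom_def)
  show "\<And>a b. a \<in> B \<Longrightarrow> b \<in> B \<Longrightarrow> psi (a \<otimes>\<^bsub>W\<^esub> b) = psi a \<otimes>\<^bsub>D\<^esub> psi b"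
    using psi by (auto simp: hom_def)
  show "psi \<one>\<^bsub>W\<^esub> = \<one>\<^bsub>D\<^esub>" using h.hom_one by simp
  show "\<And>a. a \<in> B \<Longrightarrow> psi (inv\<^bsub>W\<^esub> a) = inv\<^bsub>D\<^esub> psi a"
  proof -
    fix a assume a: "a \<in> B"
    show "psi (inv\<^bsub>W\<^esub> a) = inv\<^bsub>D\<^esub> psi a" using h.hom_inv[of a] W.m_inv_consistent[OF B a] a by simp
  qed
qed

lemma ext_step:
  assumes W: "comm_group W" and D: "comm_group D" "divisible_group D"
    and B: "subgroup B W" and psi: "psi \<in> hom (W\<lparr>carrier:=B\<rparr>) D"
    and x: "x \<in> carrier W"
  shows "\<exists>B' psi'. subgroup B' W \<and> B \<subseteq> B' \<and> x \<in> B' \<and> psi' \<in> hom (W\<lparr>carrier:=B'\<rparr>) D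
                 \<and> (\<forall>b\<in>B. psi' b = psi b)"
proof -
  interpret W: comm_group W by fact
  interpret D: comm_group D by fact
  note hr = hom_restr[OF W.is_group D.is_group B psi]
  have Bc: "\<And>b. b \<in> B \<Longrightarrow> b \<in> carrier W" by (rule subgroup.mem_carrier[OF B])
  obtain d where d: "d \<in> carrier D" "\<And>k::int. x [^]\<^bsub>W\<^esub> k \<in> B \<Longrightarrow> d [^]\<^bsub>D\<^esub> k = psi (x [^]\<^bsub>W\<^esub> k)"
    using ext_step_d[OF assms] by blast
  have wd: "psi b1 \<otimes>\<^bsub>D\<^esub> d [^]\<^bsub>D\<^esub> k1 = psi b2 \<otimes>\<^bsub>D\<^esub> d [^]\<^bsub>D\<^esub> k2"
    if b: "b1 \<in> B" "b2 \<in> B" and eq: "b1 \<otimes>\<^bsub>W\<^esub> x [^]\<^bsub>W\<^esub> (k1::int) = b2 \<otimes>\<^bsub>W\<^esub> x [^]\<^bsub>W\<^esub> (k2::int)" for b1 b2 k1 k2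
  proof -
    have c: "b1 \<in> carrier W" "b2 \<in> carrier W" using b Bc by auto
    have "inv\<^bsub>W\<^esub> b1 \<otimes>\<^bsub>W\<^esub> b2 = inv\<^bsub>W\<^esub> b1 \<otimes>\<^bsub>W\<^esub> (b2 \<otimes>\<^bsub>W\<^esub> x [^]\<^bsub>W\<^esub> k2) \<otimes>\<^bsub>W\<^esub> inv\<^bsub>W\<^esub> (x [^]\<^bsub>W\<^esub> k2)"
      using c x by (simp add: W.m_assoc)
    also have "\<dots> = inv\<^bsub>W\<^esub> b1 \<otimes>\<^bsub>W\<^esub> (b1 \<otimes>\<^bsub>W\<^esub> x [^]\<^bsub>W\<^esub> k1) \<otimes>\<^bsub>W\<^esub> inv\<^bsub>W\<^esub> (x [^]\<^bsub>W\<^esub> k2)"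
      using eq by simp
    also have "\<dots> = x [^]\<^bsub>W\<^esub> (k1 - k2)"
      using c x by (simp add: W.m_assoc[symmetric] W.int_pow_diff)
    finally have e: "x [^]\<^bsub>W\<^esub> (k1 - k2) = inv\<^bsub>W\<^esub> b1 \<otimes>\<^bsub>W\<^esub> b2" by simp
    have inB: "inv\<^bsub>W\<^esub> b1 \<otimes>\<^bsub>W\<^esub> b2 \<in> B"
      using b subgroup.m_closed[OF B] subgroup.m_inv_closed[OF B] by blast
    have "d [^]\<^bsub>D\<^esub> (k1 - k2) = inv\<^bsub>D\<^esub> psi b1 \<otimes>\<^bsub>D\<^esub> psi b2"
      using d(2)[of "k1 - k2"] e inB hr(2,4) b subgroup.m_inv_closed[OF B] by simp
    then have "psi b1 \<otimes>\<^bsub>D\<^esub> d [^]\<^bsub>D\<^esub> k1 = psi b1 \<otimes>\<^bsub>D\<^esub> (inv\<^bsub>D\<^esub> psi b1 \<otimes>\<^bsub>D\<^esub> psi b2) \<otimes>\<^bsub>D\<^esub> d [^]\<^bsub>D\<^esub> k2"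
      using D.int_pow_mult[OF d(1), of "k1 - k2" k2] d(1) hr(1) b by (simp add: D.m_assoc)
    also have "\<dots> = psi b2 \<otimes>\<^bsub>D\<^esub> d [^]\<^bsub>D\<^esub> k2"
      using d(1) hr(1) b by (simp add: D.m_assoc[symmetric])
    finally show ?thesis .
  qed
  define B' where "B' = {b \<otimes>\<^bsub>W\<^esub> x [^]\<^bsub>W\<^esub> (k::int) | b k. b \<in> B}"
  define psi' where "psi' = (\<lambda>y. SOME v. \<exists>b\<in>B. \<exists>k::int. y = b \<otimes>\<^bsub>W\<^esub> x [^]\<^bsub>W\<^esub> k \<and> v = psi b \<otimes>\<^bsub>D\<^esub> d [^]\<^bsub>D\<^esub> k)"
  have psi'_eq: "psi' (b \<otimes>\<^bsub>W\<^esub> x [^]\<^bsub>W\<^esub> k) = psi b \<otimes>\<^bsub>D\<^esub> d [^]\<^bsub>D\<^esub> k" if "b \<in> B" for b and k :: int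
  proof -
    let ?P = "\<lambda>v. \<exists>b'\<in>B. \<exists>k'::int. b \<otimes>\<^bsub>W\<^esub> x [^]\<^bsub>W\<^esub> k = b' \<otimes>\<^bsub>W\<^esub> x [^]\<^bsub>W\<^esub> k' \<and> v = psi b' \<otimes>\<^bsub>D\<^esub> d [^]\<^bsub>D\<^esub> k'"
    have "?P (psi b \<otimes>\<^bsub>D\<^esub> d [^]\<^bsub>D\<^esub> k)" using that by blast
    then have "?P (psi' (b \<otimes>\<^bsub>W\<^esub> x [^]\<^bsub>W\<^esub> k))" unfolding psi'_def by (rule someI)
    then show ?thesis using wd that by metis
  qed
  have mulB': "(b1 \<otimes>\<^bsub>W\<^esub> x [^]\<^bsub>W\<^esub> k1) \<otimes>\<^bsub>W\<^esub> (b2 \<otimes>\<^bsub>W\<^esub> x [^]\<^bsub>W\<^esub> k2)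
      = (b1 \<otimes>\<^bsub>W\<^esub> b2) \<otimes>\<^bsub>W\<^esub> x [^]\<^bsub>W\<^esub> (k1 + k2)" if "b1 \<in> B" "b2 \<in> B" for b1 b2 and k1 k2 :: int
    using that Bc x by (simp add: W.int_pow_mult W.m_ac)
  have invB': "inv\<^bsub>W\<^esub> (b \<otimes>\<^bsub>W\<^esub> x [^]\<^bsub>W\<^esub> k) = inv\<^bsub>W\<^esub> b \<otimes>\<^bsub>W\<^esub> x [^]\<^bsub>W\<^esub> (- k)" if "b \<in> B" for b and k :: int
    using that Bc x by (simp add: W.inv_mult W.int_pow_neg)
  have sub: "subgroup B' W"
  proof (rule W.subgroupI)
    show "B' \<subseteq> carrier W" unfolding B'_def using Bc x by auto
    have "\<one>\<^bsub>W\<^esub> \<otimes>\<^bsub>W\<^esub> x [^]\<^bsub>W\<^esub> (0::int) \<in> B'" unfolding B'_def using subgroup.one_closed[OF B] by blast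
    then show "B' \<noteq> {}" by blast
    show "inv\<^bsub>W\<^esub> a \<in> B'" if "a \<in> B'" for a
      using that invB' subgroup.m_inv_closed[OF B] unfolding B'_def by fastforce
    show "a \<otimes>\<^bsub>W\<^esub> b \<in> B'" if "a \<in> B'" "b \<in> B'" for a b
    proof -
      obtain b1 k1 where 1: "a = b1 \<otimes>\<^bsub>W\<^esub> x [^]\<^bsub>W\<^esub> (k1::int)" "b1 \<in> B" using \<open>a \<in> B'\<close> unfolding B'_def by blast
      obtain b2 k2 where 2: "b = b2 \<otimes>\<^bsub>W\<^esub> x [^]\<^bsub>W\<^esub> (k2::int)" "b2 \<in> B" using \<open>b \<in> B'\<close> unfolding B'_def by blast
      show ?thesis using 1 2 mulB' subgroup.m_closed[OF B] unfolding B'_def by fastforce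
    qed
  qed
  have BB': "B \<subseteq> B'"
  proof
    fix b assume "b \<in> B"
    then have "b = b \<otimes>\<^bsub>W\<^esub> x [^]\<^bsub>W\<^esub> (0::int)" using Bc by simp
    then show "b \<in> B'" unfolding B'_def using \<open>b \<in> B\<close> by blast
  qed
  have xB': "x \<in> B'"
  proof -
    have "x = \<one>\<^bsub>W\<^esub> \<otimes>\<^bsub>W\<^esub> x [^]\<^bsub>W\<^esub> (1::int)" using x by simp
    then show ?thesis unfolding B'_def using subgroup.one_closed[OF B] by blast
  qed
  have hom: "psi' \<in> hom (W\<lparr>carrier:=B'\<rparr>) D"
  proof (rule homI)
    fix a assume "a \<in> carrier (W\<lparr>carrier:=B'\<rparr>)"
    then obtain b k where "a = b \<otimes>\<^bsub>W\<^esub> x [^]\<^bsub>W\<^esub> (k::int)" "b \<in> B" unfolding B'_def by auto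
    then show "psi' a \<in> carrier D" using psi'_eq hr(1) d(1) by simp
  next
    fix a c assume "a \<in> carrier (W\<lparr>carrier:=B'\<rparr>)" "c \<in> carrier (W\<lparr>carrier:=B'\<rparr>)"
    then obtain b1 k1 b2 k2 where 1: "a = b1 \<otimes>\<^bsub>W\<^esub> x [^]\<^bsub>W\<^esub> (k1::int)" "b1 \<in> B"
      and 2: "c = b2 \<otimes>\<^bsub>W\<^esub> x [^]\<^bsub>W\<^esub> (k2::int)" "b2 \<in> B" unfolding B'_def by auto
    have "psi' (a \<otimes>\<^bsub>W\<lparr>carrier:=B'\<rparr>\<^esub> c) = psi (b1 \<otimes>\<^bsub>W\<^esub> b2) \<otimes>\<^bsub>D\<^esub> d [^]\<^bsub>D\<^esub> (k1 + k2)"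
      using 1 2 mulB' psi'_eq subgroup.m_closed[OF B] by simp
    also have "\<dots> = (psi b1 \<otimes>\<^bsub>D\<^esub> d [^]\<^bsub>D\<^esub> k1) \<otimes>\<^bsub>D\<^esub> (psi b2 \<otimes>\<^bsub>D\<^esub> d [^]\<^bsub>D\<^esub> k2)"
      using 1 2 hr(1,2) d(1) by (simp add: D.int_pow_mult D.m_ac)
    also have "\<dots> = psi' a \<otimes>\<^bsub>D\<^esub> psi' c" using 1 2 psi'_eq by simp
    finally show "psi' (a \<otimes>\<^bsub>W\<lparr>carrier:=B'\<rparr>\<^esub> c) = psi' a \<otimes>\<^bsub>D\<^esub> psi' c" by simp
  qed
  have agree: "\<forall>b\<in>B. psi' b = psi b"
  proof
    fix b assume b: "b \<in> B"
    have "psi' b = psi' (b \<otimes>\<^bsub>W\<^esub> x [^]\<^bsub>W\<^esub> (0::int))" using b Bc by simp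
    also have "\<dots> = psi b \<otimes>\<^bsub>D\<^esub> d [^]\<^bsub>D\<^esub> (0::int)" by (rule psi'_eq[OF b])
    also have "\<dots> = psi b" using hr(1)[OF b] by simp
    finally show "psi' b = psi b" .
  qed
  show ?thesis using sub BB' xB' hom agree by blast
qed


lemma divisible_extend:
  assumes W: "comm_group W" and Zs: "subgroup Z W" and D: "comm_group D" "divisible_group D"
    and chi: "chi \<in> hom (W\<lparr>carrier := Z\<rparr>) D"
  shows "\<exists>psi \<in> hom W D. \<forall>z\<in>Z. psi z = chi z"
proof -
  interpret W: comm_group W by fact
  interpret D: comm_group D by fact
  define gr :: "'a set \<Rightarrow> ('a \<Rightarrow> 'c) \<Rightarrow> ('a \<times> 'c) set" where "gr B f = (\<lambda>b. (b, f b)) ` B" for B f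
  have gr_mem: "(b, d) \<in> gr B f \<longleftrightarrow> b \<in> B \<and> d = f b" for b d B f unfolding gr_def by auto
  define F where "F = {gr B f | B f. subgroup B W \<and> Z \<subseteq> B \<and> f \<in> hom (W\<lparr>carrier:=B\<rparr>) D \<and> (\<forall>z\<in>Z. f z = chi z)}"
  have chainsF: "\<exists>U\<in>F. \<forall>R\<in>C. R \<subseteq> U" if C: "C \<in> chains F" for C
  proof (cases "C = {}")
    case True
    have "gr Z chi \<in> F" unfolding F_def using Zs chi by blast
    then show ?thesis using True by blast
  next
    case False
    have CF: "C \<subseteq> F" using chainsD2[OF C] .
    have common: "\<exists>R\<in>C. R1 \<subseteq> R \<and> R2 \<subseteq> R" if "R1 \<in> C" "R2 \<in> C" for R1 R2
      using chainsD[OF C that] that by blast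
    have unF: "\<exists>B f. R = gr B f \<and> subgroup B W \<and> Z \<subseteq> B \<and> f \<in> hom (W\<lparr>carrier:=B\<rparr>) D \<and> (\<forall>z\<in>Z. f z = chi z)"
      if "R \<in> C" for R using that CF unfolding F_def by blast
    have func: "d1 = d2" if h: "(b, d1) \<in> \<Union>C" "(b, d2) \<in> \<Union>C" for b d1 d2
    proof -
      obtain R1 R2 where R: "R1 \<in> C" "R2 \<in> C" "(b, d1) \<in> R1" "(b, d2) \<in> R2" using h by blast
      obtain R where "R \<in> C" "R1 \<subseteq> R" "R2 \<subseteq> R" using common[OF R(1,2)] by blast
      moreover obtain B f where "R = gr B f" using unF[OF \<open>R \<in> C\<close>] by blast
      ultimately have "(b, d1) \<in> gr B f" "(b, d2) \<in> gr B f" using R by auto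
      then show ?thesis unfolding gr_mem by simp
    qed
    define BB where "BB = Domain (\<Union>C)"
    define ff where "ff x = (THE d. (x, d) \<in> \<Union>C)" for x
    have ff_eq: "ff b = d" if "(b, d) \<in> \<Union>C" for b d
      unfolding ff_def
    proof (rule the_equality)
      show "(b, d) \<in> \<Union>C" by fact
      show "\<And>e. (b, e) \<in> \<Union>C \<Longrightarrow> e = d" using func that by blast
    qed
    have ff_R: "b \<in> BB \<and> ff b = f b" if "R \<in> C" "R = gr B f" "b \<in> B" for R B f b
    proof -
      have "(b, f b) \<in> \<Union>C" using that gr_mem by blast
      then show ?thesis using ff_eq BB_def by blast
    qed
    have inBB: "\<exists>R B f. R \<in> C \<and> R = gr B f \<and> b \<in> B \<and> subgroup B W \<and> Z \<subseteq> B \<and> f \<in> hom (W\<lparr>carrier:=B\<rparr>) D" if h: "b \<in> BB" for b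
    proof -
      obtain d R where "R \<in> C" "(b, d) \<in> R" using h BB_def by blast
      moreover obtain B f where "R = gr B f" "subgroup B W" "Z \<subseteq> B" "f \<in> hom (W\<lparr>carrier:=B\<rparr>) D" using unF[OF \<open>R \<in> C\<close>] by blast
      ultimately show ?thesis using gr_mem by blast
    qed
    have two: "\<exists>R B f. R \<in> C \<and> R = gr B f \<and> a \<in> B \<and> b \<in> B \<and> subgroup B W \<and> Z \<subseteq> B \<and> f \<in> hom (W\<lparr>carrier:=B\<rparr>) D"
      if h: "a \<in> BB" "b \<in> BB" for a b
    proof -
      obtain R1 B1 f1 where 1: "R1 \<in> C" "R1 = gr B1 f1" "a \<in> B1" using inBB[OF h(1)] by blast
      obtain R2 B2 f2 where 2: "R2 \<in> C" "R2 = gr B2 f2" "b \<in> B2" using inBB[OF h(2)] by blast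
      obtain R where R: "R \<in> C" "R1 \<subseteq> R" "R2 \<subseteq> R" using common[OF 1(1) 2(1)] by blast
      obtain B f where Bf: "R = gr B f" "subgroup B W" "Z \<subseteq> B" "f \<in> hom (W\<lparr>carrier:=B\<rparr>) D" using unF[OF R(1)] by blast
      have "(a, f1 a) \<in> R" "(b, f2 b) \<in> R" using 1 2 R gr_mem by blast+
      then have "a \<in> B" "b \<in> B" using Bf(1) gr_mem by blast+
      then show ?thesis using R(1) Bf by blast
    qed
    obtain R0 where R0: "R0 \<in> C" using False by blast
    obtain B0 f0 where B0: "R0 = gr B0 f0" "subgroup B0 W" "Z \<subseteq> B0" "\<forall>z\<in>Z. f0 z = chi z" using unF[OF R0] by blast
    have ZBB: "Z \<subseteq> BB" and ffZ: "\<forall>z\<in>Z. ff z = chi z" using ff_R[OF R0 B0(1)] B0 by auto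
    have subBB: "subgroup BB W"
    proof (rule W.subgroupI)
      show "BB \<subseteq> carrier W"
      proof
        fix b assume "b \<in> BB"
        then obtain R B f where "subgroup B W" "b \<in> B" using inBB by blast
        then show "b \<in> carrier W" by (rule subgroup.mem_carrier)
      qed
      show "BB \<noteq> {}" using ZBB subgroup.one_closed[OF Zs] by blast
      show "inv\<^bsub>W\<^esub> a \<in> BB" if h: "a \<in> BB" for a
      proof -
        obtain R B f where R: "R \<in> C" "R = gr B f" "a \<in> B" "subgroup B W" using inBB[OF h] by blast
        have "inv\<^bsub>W\<^esub> a \<in> B" using R(3,4) by (simp add: subgroup.m_inv_closed)
        then show ?thesis using ff_R[OF R(1,2)] by blast
      qed
      show "a \<otimes>\<^bsub>W\<^esub> b \<in> BB" if h: "a \<in> BB" "b \<in> BB" for a b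
      proof -
        obtain R B f where R: "R \<in> C" "R = gr B f" "a \<in> B" "b \<in> B" "subgroup B W" using two[OF h] by blast
        have "a \<otimes>\<^bsub>W\<^esub> b \<in> B" using R(3,4,5) by (simp add: subgroup.m_closed)
        then show ?thesis using ff_R[OF R(1,2)] by blast
      qed
    qed
    have homBB: "ff \<in> hom (W\<lparr>carrier:=BB\<rparr>) D"
    proof (rule homI)
      fix a assume "a \<in> carrier (W\<lparr>carrier:=BB\<rparr>)"
      then have "a \<in> BB" by simp
      then obtain R B f where "R \<in> C" "R = gr B f" "a \<in> B" "f \<in> hom (W\<lparr>carrier:=B\<rparr>) D" using inBB by blast
      then show "ff a \<in> carrier D" using ff_R by (auto simp: hom_def)
    next
      fix a b assume "a \<in> carrier (W\<lparr>carrier:=BB\<rparr>)" "b \<in> carrier (W\<lparr>carrier:=BB\<rparr>)"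
      then obtain R B f where R: "R \<in> C" "R = gr B f" "a \<in> B" "b \<in> B" "subgroup B W" "f \<in> hom (W\<lparr>carrier:=B\<rparr>) D"
        using two[of a b] by auto
      have ab: "a \<otimes>\<^bsub>W\<^esub> b \<in> B" using R(3,4,5) by (simp add: subgroup.m_closed)
      have "f (a \<otimes>\<^bsub>W\<^esub> b) = f a \<otimes>\<^bsub>D\<^esub> f b" using R(3,4,6) by (auto simp: hom_def)
      then show "ff (a \<otimes>\<^bsub>W\<lparr>carrier:=BB\<rparr>\<^esub> b) = ff a \<otimes>\<^bsub>D\<^esub> ff b"
        using ff_R[OF R(1,2)] R(3,4) ab by simp
    qed
    have "\<Union>C = gr BB ff"
    proof
      show "\<Union>C \<subseteq> gr BB ff"
      proof
        fix p assume p: "p \<in> \<Union>C"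
        obtain b d where bd: "p = (b, d)" by (cases p)
        have "ff b = d" using ff_eq p bd by blast
        moreover have "b \<in> BB" unfolding BB_def using p bd by blast
        ultimately show "p \<in> gr BB ff" using bd gr_mem by blast
      qed
      show "gr BB ff \<subseteq> \<Union>C"
      proof
        fix p assume "p \<in> gr BB ff"
        then obtain b where b: "p = (b, ff b)" "b \<in> BB" unfolding gr_def by blast
        then obtain d where "(b, d) \<in> \<Union>C" unfolding BB_def by blast
        then show "p \<in> \<Union>C" using b ff_eq by auto
      qed
    qed
    then have "\<Union>C \<in> F" unfolding F_def using subBB ZBB homBB ffZ by blast
    then show ?thesis by blast
  qed
  obtain M where M: "M \<in> F" "\<forall>R\<in>F. M \<subseteq> R \<longrightarrow> R = M"
    using Zorn_Lemma2[of F] chainsF by blast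
  obtain B f where Bf: "M = gr B f" "subgroup B W" "Z \<subseteq> B" "f \<in> hom (W\<lparr>carrier:=B\<rparr>) D" "\<forall>z\<in>Z. f z = chi z"
    using M(1) unfolding F_def by blast
  have "B = carrier W"
  proof (rule ccontr)
    assume "B \<noteq> carrier W"
    then obtain x where x: "x \<in> carrier W" "x \<notin> B" using subgroup.subset[OF Bf(2)] by blast
    obtain B' f' where B': "subgroup B' W" "B \<subseteq> B'" "x \<in> B'" "f' \<in> hom (W\<lparr>carrier:=B'\<rparr>) D" "\<forall>b\<in>B. f' b = f b"
      using ext_step[OF W D Bf(2) Bf(4) x(1)] by blast
    have ZB': "Z \<subseteq> B'" using B'(2) Bf(3) by blast
    have chi': "\<forall>z\<in>Z. f' z = chi z" using B'(5) Bf(3,5) by auto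
    have "gr B' f' \<in> F" unfolding F_def using B'(1,4) ZB' chi' by blast
    moreover have "M \<subseteq> gr B' f'" using Bf(1) B'(2,5) gr_mem by auto
    ultimately have "gr B' f' = M" using M(2) by blast
    then have "(x, f' x) \<in> M" using B'(3) gr_mem by blast
    then show False using Bf(1) x(2) gr_mem by blast
  qed
  then show ?thesis using Bf(4,5) by auto
qed

lemma (in comm_group) inv_cancel_lc: "x \<in> carrier G \<Longrightarrow> y \<in> carrier G \<Longrightarrow> x \<otimes> (inv x \<otimes> y) = y"
  by (simp add: m_assoc[symmetric])
lemma (in comm_group) inv_cancel_lc2: "x \<in> carrier G \<Longrightarrow> y \<in> carrier G \<Longrightarrow> inv x \<otimes> (x \<otimes> y) = y"
  by (simp add: m_assoc[symmetric])
lemma (in comm_group) inv_cancel_3: "x \<in> carrier G \<Longrightarrow> y \<in> carrier G \<Longrightarrow> z \<in> carrier G \<Longrightarrow> x \<otimes> (y \<otimes> (inv x \<otimes> z)) = y \<otimes> z"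
proof -
  assume c: "x \<in> carrier G" "y \<in> carrier G" "z \<in> carrier G"
  have "y \<otimes> (inv x \<otimes> z) = inv x \<otimes> (y \<otimes> z)" using c by (intro m_lcomm) simp_all
  then show ?thesis using c by (simp add: inv_cancel_lc)
qed
lemma (in comm_group) inv_cancel_4: "x \<in> carrier G \<Longrightarrow> y \<in> carrier G \<Longrightarrow> x \<otimes> (y \<otimes> inv x) = y"
proof -
  assume c: "x \<in> carrier G" "y \<in> carrier G"
  have "y \<otimes> inv x = inv x \<otimes> y" using c by (intro m_comm) simp_all
  then show ?thesis using c by (simp add: inv_cancel_lc)
qed
lemma (in comm_group) inv_cancel_5: "x \<in> carrier G \<Longrightarrow> y \<in> carrier G \<Longrightarrow> z \<in> carrier G \<Longrightarrow> inv x \<otimes> (y \<otimes> (x \<otimes> z)) = y \<otimes> z"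
proof -
  assume c: "x \<in> carrier G" "y \<in> carrier G" "z \<in> carrier G"
  have "y \<otimes> (x \<otimes> z) = x \<otimes> (y \<otimes> z)" using c by (intro m_lcomm) simp_all
  then show ?thesis using c by (simp add: inv_cancel_lc2)
qed
lemma (in comm_group) inv_cancel_6: "x \<in> carrier G \<Longrightarrow> y \<in> carrier G \<Longrightarrow> inv x \<otimes> (y \<otimes> x) = y"
proof -
  assume c: "x \<in> carrier G" "y \<in> carrier G"
  have "y \<otimes> x = x \<otimes> y" using c by (intro m_comm) simp_all
  then show ?thesis using c by (simp add: inv_cancel_lc2)
qed
lemmas (in comm_group) inv_cancels = inv_cancel_lc inv_cancel_lc2 inv_cancel_3 inv_cancel_4 inv_cancel_5 inv_cancel_6

lemma cochain_comm_group:
  assumes D: "comm_group D"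
  shows "comm_group (cochain2 Q D)"
proof -
  interpret D: comm_group D by fact
  let ?S = "carrier Q \<times> carrier Q"
  show ?thesis
  proof (rule comm_groupI)
    fix f g assume "f \<in> carrier (cochain2 Q D)" "g \<in> carrier (cochain2 Q D)"
    then show "f \<otimes>\<^bsub>cochain2 Q D\<^esub> g \<in> carrier (cochain2 Q D)"
      by (auto simp: cochain2_def PiE_iff)
  next
    show "\<one>\<^bsub>cochain2 Q D\<^esub> \<in> carrier (cochain2 Q D)" by (auto simp: cochain2_def PiE_iff)
  next
    fix f g h assume "f \<in> carrier (cochain2 Q D)" "g \<in> carrier (cochain2 Q D)" "h \<in> carrier (cochain2 Q D)"
    then show "f \<otimes>\<^bsub>cochain2 Q D\<^esub> g \<otimes>\<^bsub>cochain2 Q D\<^esub> h = f \<otimes>\<^bsub>cochain2 Q D\<^esub> (g \<otimes>\<^bsub>cochain2 Q D\<^esub> h)"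
      by (auto simp: cochain2_def PiE_iff D.m_assoc intro!: restrict_ext)
  next
    fix f g assume "f \<in> carrier (cochain2 Q D)" "g \<in> carrier (cochain2 Q D)"
    then show "f \<otimes>\<^bsub>cochain2 Q D\<^esub> g = g \<otimes>\<^bsub>cochain2 Q D\<^esub> f"
      by (auto simp: cochain2_def PiE_iff D.m_comm intro!: restrict_ext)
  next
    fix f assume "f \<in> carrier (cochain2 Q D)"
    then show "\<one>\<^bsub>cochain2 Q D\<^esub> \<otimes>\<^bsub>cochain2 Q D\<^esub> f = f"
      by (auto simp: cochain2_def PiE_iff extensional_def fun_eq_iff)
  next
    fix f assume f: "f \<in> carrier (cochain2 Q D)"
    show "\<exists>y\<in>carrier (cochain2 Q D). y \<otimes>\<^bsub>cochain2 Q D\<^esub> f = \<one>\<^bsub>cochain2 Q D\<^esub>"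
    proof (intro bexI)
      show "(\<lambda>p\<in>?S. inv\<^bsub>D\<^esub> (f p)) \<in> carrier (cochain2 Q D)" using f by (auto simp: cochain2_def PiE_iff)
      show "(\<lambda>p\<in>?S. inv\<^bsub>D\<^esub> (f p)) \<otimes>\<^bsub>cochain2 Q D\<^esub> f = \<one>\<^bsub>cochain2 Q D\<^esub>"
        using f by (auto simp: cochain2_def PiE_iff intro!: restrict_ext)
    qed
  qed
qed

lemma cochain_inv:
  assumes D: "comm_group D" and f: "f \<in> carrier (cochain2 Q D)"
  shows "inv\<^bsub>cochain2 Q D\<^esub> f = (\<lambda>p\<in>carrier Q \<times> carrier Q. inv\<^bsub>D\<^esub> (f p))"
proof -
  interpret D: comm_group D by fact
  interpret C: comm_group "cochain2 Q D" by (rule cochain_comm_group[OF D])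
  show ?thesis
  proof (rule C.inv_equality)
    show "(\<lambda>p\<in>carrier Q \<times> carrier Q. inv\<^bsub>D\<^esub> (f p)) \<in> carrier (cochain2 Q D)" using f by (auto simp: cochain2_def PiE_iff)
    show "(\<lambda>p\<in>carrier Q \<times> carrier Q. inv\<^bsub>D\<^esub> (f p)) \<otimes>\<^bsub>cochain2 Q D\<^esub> f = \<one>\<^bsub>cochain2 Q D\<^esub>"
      using f by (auto simp: cochain2_def PiE_iff intro!: restrict_ext)
  qed (rule f)
qed

lemma cochain_mult: "f \<otimes>\<^bsub>cochain2 Q D\<^esub> g = (\<lambda>p\<in>carrier Q \<times> carrier Q. f p \<otimes>\<^bsub>D\<^esub> g p)"
  by (simp add: cochain2_def)
lemma cochain_one: "\<one>\<^bsub>cochain2 Q D\<^esub> = (\<lambda>p\<in>carrier Q \<times> carrier Q. \<one>\<^bsub>D\<^esub>)"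
  by (simp add: cochain2_def)
lemma cochain_carrier: "carrier (cochain2 Q D) = carrier Q \<times> carrier Q \<rightarrow>\<^sub>E carrier D"
  by (simp add: cochain2_def)


lemma cocycles_subgroup:
  assumes Q: "group Q" and D: "comm_group D"
  shows "subgroup (cocycles2 Q D) (cochain2 Q D)"
proof -
  interpret Q: group Q by fact
  interpret D: comm_group D by fact
  interpret C: comm_group "cochain2 Q D" by (rule cochain_comm_group[OF D])
  let ?S = "carrier Q \<times> carrier Q"
  have fc: "f p \<in> carrier D" if "f \<in> carrier (cochain2 Q D)" "p \<in> ?S" for f p
    using that by (auto simp: cochain2_def PiE_iff)
  show ?thesis
  proof (rule C.subgroupI)
    show "cocycles2 Q D \<subseteq> carrier (cochain2 Q D)" unfolding cocycles2_def by blast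
    have "\<one>\<^bsub>cochain2 Q D\<^esub> \<in> cocycles2 Q D"
      unfolding cocycles2_def by (auto simp: cochain_one cochain_carrier PiE_iff)
    then show "cocycles2 Q D \<noteq> {}" by blast
  next
    fix f assume f: "f \<in> cocycles2 Q D"
    then have fC: "f \<in> carrier (cochain2 Q D)" unfolding cocycles2_def by blast
    show "inv\<^bsub>cochain2 Q D\<^esub> f \<in> cocycles2 Q D"
      unfolding cocycles2_def
    proof (intro CollectI conjI ballI)
      show "inv\<^bsub>cochain2 Q D\<^esub> f \<in> carrier (cochain2 Q D)" using fC by simp
      fix x y z assume xyz: "x \<in> carrier Q" "y \<in> carrier Q" "z \<in> carrier Q"
      have e: "f (y, z) \<otimes>\<^bsub>D\<^esub> f (x, y \<otimes>\<^bsub>Q\<^esub> z) = f (x \<otimes>\<^bsub>Q\<^esub> y, z) \<otimes>\<^bsub>D\<^esub> f (x, y)"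
        using f xyz unfolding cocycles2_def by blast
      have c: "f (y, z) \<in> carrier D" "f (x, y \<otimes>\<^bsub>Q\<^esub> z) \<in> carrier D" "f (x \<otimes>\<^bsub>Q\<^esub> y, z) \<in> carrier D" "f (x, y) \<in> carrier D"
        using fc[OF fC] xyz by auto
      have "inv\<^bsub>D\<^esub> (f (y, z)) \<otimes>\<^bsub>D\<^esub> inv\<^bsub>D\<^esub> (f (x, y \<otimes>\<^bsub>Q\<^esub> z)) = inv\<^bsub>D\<^esub> (f (x \<otimes>\<^bsub>Q\<^esub> y, z)) \<otimes>\<^bsub>D\<^esub> inv\<^bsub>D\<^esub> (f (x, y))"
        using e c by (metis D.inv_mult)
      then show "(inv\<^bsub>cochain2 Q D\<^esub> f) (y, z) \<otimes>\<^bsub>D\<^esub> (inv\<^bsub>cochain2 Q D\<^esub> f) (x, y \<otimes>\<^bsub>Q\<^esub> z) =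
          (inv\<^bsub>cochain2 Q D\<^esub> f) (x \<otimes>\<^bsub>Q\<^esub> y, z) \<otimes>\<^bsub>D\<^esub> (inv\<^bsub>cochain2 Q D\<^esub> f) (x, y)"
        using xyz by (simp add: cochain_inv[OF D fC])
    qed
  next
    fix f g assume f: "f \<in> cocycles2 Q D" and g: "g \<in> cocycles2 Q D"
    then have fC: "f \<in> carrier (cochain2 Q D)" and gC: "g \<in> carrier (cochain2 Q D)" unfolding cocycles2_def by blast+
    show "f \<otimes>\<^bsub>cochain2 Q D\<^esub> g \<in> cocycles2 Q D"
      unfolding cocycles2_def
    proof (intro CollectI conjI ballI)
      show "f \<otimes>\<^bsub>cochain2 Q D\<^esub> g \<in> carrier (cochain2 Q D)" using fC gC by simp
      fix x y z assume xyz: "x \<in> carrier Q" "y \<in> carrier Q" "z \<in> carrier Q"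
      have e: "f (y, z) \<otimes>\<^bsub>D\<^esub> f (x, y \<otimes>\<^bsub>Q\<^esub> z) = f (x \<otimes>\<^bsub>Q\<^esub> y, z) \<otimes>\<^bsub>D\<^esub> f (x, y)"
        using f xyz unfolding cocycles2_def by blast
      have e2: "g (y, z) \<otimes>\<^bsub>D\<^esub> g (x, y \<otimes>\<^bsub>Q\<^esub> z) = g (x \<otimes>\<^bsub>Q\<^esub> y, z) \<otimes>\<^bsub>D\<^esub> g (x, y)"
        using g xyz unfolding cocycles2_def by blast
      have c: "f (y, z) \<in> carrier D" "f (x, y \<otimes>\<^bsub>Q\<^esub> z) \<in> carrier D" "f (x \<otimes>\<^bsub>Q\<^esub> y, z) \<in> carrier D" "f (x, y) \<in> carrier D"
        "g (y, z) \<in> carrier D" "g (x, y \<otimes>\<^bsub>Q\<^esub> z) \<in> carrier D" "g (x \<otimes>\<^bsub>Q\<^esub> y, z) \<in> carrier D" "g (x, y) \<in> carrier D"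
        using fc[OF fC] fc[OF gC] xyz by auto
      have "(f (y, z) \<otimes>\<^bsub>D\<^esub> g (y, z)) \<otimes>\<^bsub>D\<^esub> (f (x, y \<otimes>\<^bsub>Q\<^esub> z) \<otimes>\<^bsub>D\<^esub> g (x, y \<otimes>\<^bsub>Q\<^esub> z))
          = (f (y, z) \<otimes>\<^bsub>D\<^esub> f (x, y \<otimes>\<^bsub>Q\<^esub> z)) \<otimes>\<^bsub>D\<^esub> (g (y, z) \<otimes>\<^bsub>D\<^esub> g (x, y \<otimes>\<^bsub>Q\<^esub> z))"
        using c by (simp add: D.m_ac)
      also have "\<dots> = (f (x \<otimes>\<^bsub>Q\<^esub> y, z) \<otimes>\<^bsub>D\<^esub> f (x, y)) \<otimes>\<^bsub>D\<^esub> (g (x \<otimes>\<^bsub>Q\<^esub> y, z) \<otimes>\<^bsub>D\<^esub> g (x, y))"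
        using e e2 by simp
      also have "\<dots> = (f (x \<otimes>\<^bsub>Q\<^esub> y, z) \<otimes>\<^bsub>D\<^esub> g (x \<otimes>\<^bsub>Q\<^esub> y, z)) \<otimes>\<^bsub>D\<^esub> (f (x, y) \<otimes>\<^bsub>D\<^esub> g (x, y))"
        using c by (simp add: D.m_ac)
      finally show "(f \<otimes>\<^bsub>cochain2 Q D\<^esub> g) (y, z) \<otimes>\<^bsub>D\<^esub> (f \<otimes>\<^bsub>cochain2 Q D\<^esub> g) (x, y \<otimes>\<^bsub>Q\<^esub> z) =
          (f \<otimes>\<^bsub>cochain2 Q D\<^esub> g) (x \<otimes>\<^bsub>Q\<^esub> y, z) \<otimes>\<^bsub>D\<^esub> (f \<otimes>\<^bsub>cochain2 Q D\<^esub> g) (x, y)"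
        using xyz by (simp add: cochain_mult)
    qed
  qed
qed

definition cob :: "('q, 'm) monoid_scheme \<Rightarrow> ('d, 'n) monoid_scheme \<Rightarrow> ('q \<Rightarrow> 'd) \<Rightarrow> ('q \<times> 'q \<Rightarrow> 'd)" where
  "cob Q D g = (\<lambda>p\<in>carrier Q \<times> carrier Q. g (fst p) \<otimes>\<^bsub>D\<^esub> g (snd p) \<otimes>\<^bsub>D\<^esub> inv\<^bsub>D\<^esub> (g (fst p \<otimes>\<^bsub>Q\<^esub> snd p)))"

lemma coboundaries_cob: "coboundaries2 Q D = {cob Q D g | g. g \<in> carrier Q \<rightarrow> carrier D}"
  unfolding coboundaries2_def cob_def by simp

lemma coboundaries_subgroup:
  assumes Q: "group Q" and D: "comm_group D"
  shows "subgroup (coboundaries2 Q D) (cochain2 Q D)" and "coboundaries2 Q D \<subseteq> cocycles2 Q D"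
proof -
  interpret Q: group Q by fact
  interpret D: comm_group D by fact
  interpret C: comm_group "cochain2 Q D" by (rule cochain_comm_group[OF D])
  have cobC: "cob Q D g \<in> carrier (cochain2 Q D)" if "g \<in> carrier Q \<rightarrow> carrier D" for g
    using that by (auto simp: cob_def cochain2_def PiE_iff)
  show "coboundaries2 Q D \<subseteq> cocycles2 Q D"
  proof
    fix f assume "f \<in> coboundaries2 Q D"
    then obtain g where g: "g \<in> carrier Q \<rightarrow> carrier D" "f = cob Q D g" unfolding coboundaries_cob by blast
    show "f \<in> cocycles2 Q D"
      unfolding cocycles2_def
    proof (intro CollectI conjI ballI)
      show "f \<in> carrier (cochain2 Q D)" using cobC g by simp
      fix x y z assume xyz: "x \<in> carrier Q" "y \<in> carrier Q" "z \<in> carrier Q"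
      have c: "g x \<in> carrier D" "g y \<in> carrier D" "g z \<in> carrier D" "g (x \<otimes>\<^bsub>Q\<^esub> y) \<in> carrier D"
         "g (y \<otimes>\<^bsub>Q\<^esub> z) \<in> carrier D" "g (x \<otimes>\<^bsub>Q\<^esub> (y \<otimes>\<^bsub>Q\<^esub> z)) \<in> carrier D"
        using g(1) xyz by auto
      have a: "x \<otimes>\<^bsub>Q\<^esub> y \<otimes>\<^bsub>Q\<^esub> z = x \<otimes>\<^bsub>Q\<^esub> (y \<otimes>\<^bsub>Q\<^esub> z)" using xyz Q.m_assoc by blast
      show "f (y, z) \<otimes>\<^bsub>D\<^esub> f (x, y \<otimes>\<^bsub>Q\<^esub> z) = f (x \<otimes>\<^bsub>Q\<^esub> y, z) \<otimes>\<^bsub>D\<^esub> f (x, y)"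
        using xyz c a by (simp add: g(2) cob_def D.m_ac D.inv_cancel_lc D.inv_cancel_lc2)
    qed
  qed
  show "subgroup (coboundaries2 Q D) (cochain2 Q D)"
  proof (rule C.subgroupI)
    show "coboundaries2 Q D \<subseteq> carrier (cochain2 Q D)" using cobC unfolding coboundaries_cob by blast
    have "cob Q D (\<lambda>_. \<one>\<^bsub>D\<^esub>) \<in> coboundaries2 Q D" unfolding coboundaries_cob by auto
    then show "coboundaries2 Q D \<noteq> {}" by blast
  next
    fix f assume "f \<in> coboundaries2 Q D"
    then obtain g where g: "g \<in> carrier Q \<rightarrow> carrier D" "f = cob Q D g" unfolding coboundaries_cob by blast
    have ig: "(\<lambda>q. inv\<^bsub>D\<^esub> (g q)) \<in> carrier Q \<rightarrow> carrier D" using g(1) by auto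
    have "inv\<^bsub>cochain2 Q D\<^esub> f = cob Q D (\<lambda>q. inv\<^bsub>D\<^esub> (g q))"
      unfolding cochain_inv[OF D cobC[OF g(1), folded g(2)]]
      using g by (auto simp: cob_def D.inv_mult Pi_iff intro!: restrict_ext)
    then show "inv\<^bsub>cochain2 Q D\<^esub> f \<in> coboundaries2 Q D" unfolding coboundaries_cob using ig by blast
  next
    fix f h assume "f \<in> coboundaries2 Q D" "h \<in> coboundaries2 Q D"
    then obtain g g' where g: "g \<in> carrier Q \<rightarrow> carrier D" "f = cob Q D g"
      and g': "g' \<in> carrier Q \<rightarrow> carrier D" "h = cob Q D g'" unfolding coboundaries_cob by blast
    have gg: "(\<lambda>q. g q \<otimes>\<^bsub>D\<^esub> g' q) \<in> carrier Q \<rightarrow> carrier D" using g(1) g'(1) by auto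
    have "f \<otimes>\<^bsub>cochain2 Q D\<^esub> h = cob Q D (\<lambda>q. g q \<otimes>\<^bsub>D\<^esub> g' q)"
      using g g' by (auto simp: cob_def cochain_mult D.inv_mult D.m_ac Pi_iff intro!: restrict_ext)
    then show "f \<otimes>\<^bsub>cochain2 Q D\<^esub> h \<in> coboundaries2 Q D" unfolding coboundaries_cob using gg by blast
  qed
qed


lemma gen_infl:
  assumes G1: "group G1" and G2: "group G2" and h: "h \<in> hom G1 G2" and K: "subgroup K G1"
    and N: "subgroup N G2" and hK: "h ` K \<subseteq> N" and f: "f \<in> carrier G1"
  shows "N <#>\<^bsub>G2\<^esub> (h ` (K #>\<^bsub>G1\<^esub> f)) = N #>\<^bsub>G2\<^esub> h f"
proof -
  interpret G1: group G1 by fact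
  interpret G2: group G2 by fact
  interpret hh: group_hom G1 G2 h using h by (simp add: group_hom_def group_hom_axioms_def G1.is_group G2.is_group)
  show ?thesis
  proof (intro equalityI subsetI)
    fix y assume "y \<in> N <#>\<^bsub>G2\<^esub> (h ` (K #>\<^bsub>G1\<^esub> f))"
    then obtain n k where nk: "n \<in> N" "k \<in> K" "y = n \<otimes>\<^bsub>G2\<^esub> h (k \<otimes>\<^bsub>G1\<^esub> f)"
      unfolding set_mult_def r_coset_def by auto
    have kc: "k \<in> carrier G1" using nk(2) subgroup.mem_carrier[OF K] by simp
    have nc: "n \<in> carrier G2" using nk(1) subgroup.mem_carrier[OF N] by simp
    have hk: "h k \<in> N" using hK nk(2) by blast
    have "y = (n \<otimes>\<^bsub>G2\<^esub> h k) \<otimes>\<^bsub>G2\<^esub> h f" using nk(3) kc f nc by (simp add: G2.m_assoc)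
    moreover have "n \<otimes>\<^bsub>G2\<^esub> h k \<in> N" using subgroup.m_closed[OF N nk(1) hk] .
    ultimately show "y \<in> N #>\<^bsub>G2\<^esub> h f" unfolding r_coset_def by blast
  next
    fix y assume "y \<in> N #>\<^bsub>G2\<^esub> h f"
    then obtain n where n: "n \<in> N" "y = n \<otimes>\<^bsub>G2\<^esub> h f" unfolding r_coset_def by blast
    have "\<one>\<^bsub>G1\<^esub> \<otimes>\<^bsub>G1\<^esub> f \<in> K #>\<^bsub>G1\<^esub> f" unfolding r_coset_def using subgroup.one_closed[OF K] by blast
    moreover have "y = n \<otimes>\<^bsub>G2\<^esub> h (\<one>\<^bsub>G1\<^esub> \<otimes>\<^bsub>G1\<^esub> f)" using n f by simp
    ultimately show "y \<in> N <#>\<^bsub>G2\<^esub> (h ` (K #>\<^bsub>G1\<^esub> f))" unfolding set_mult_def using n(1) by blast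
  qed
qed


lemma r_coset_upd': "r_coset (G\<lparr>carrier := S\<rparr>) = r_coset G"
  by (auto simp: r_coset_def fun_eq_iff)
lemma set_mult_upd': "set_mult (G\<lparr>carrier := S\<rparr>) = set_mult G"
  by (simp add: set_mult_def fun_eq_iff)

locale hloc = Q: group Q + D: comm_group D
  for Q :: "('q, 'm) monoid_scheme" and D :: "('d, 'n) monoid_scheme"
begin

abbreviation "CC \<equiv> cochain2 Q D"
abbreviation "YY \<equiv> cocycles2 Q D"
abbreviation "BB \<equiv> coboundaries2 Q D"
abbreviation "GG \<equiv> CC\<lparr>carrier := YY\<rparr>"

lemma C_comm: "comm_group CC" by (rule cochain_comm_group[OF D.comm_group_axioms])
lemma C_grp: "group CC" using C_comm comm_group.axioms(2) by blast
lemma Y_sub: "subgroup YY CC" by (rule cocycles_subgroup[OF Q.is_group D.comm_group_axioms])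
lemma B_sub: "subgroup BB CC" by (rule coboundaries_subgroup(1)[OF Q.is_group D.comm_group_axioms])
lemma BY: "BB \<subseteq> YY" by (rule coboundaries_subgroup(2)[OF Q.is_group D.comm_group_axioms])

lemma GG_comm: "comm_group GG"
proof -
  interpret C: comm_group CC by (rule C_comm)
  have "group GG" using C.subgroup_imp_group[OF Y_sub] .
  then show ?thesis
    by (rule group.group_comm_groupI) (use subgroup.mem_carrier[OF Y_sub] C.m_comm in auto)
qed
lemma B_sub_GG: "subgroup BB GG"
  using group.subgroup_incl[OF C_grp B_sub Y_sub BY] .
lemma B_normal: "BB \<lhd> GG" using comm_group.subgroup_imp_normal[OF GG_comm B_sub_GG] .
lemma H2_comm: "comm_group (H2 Q D)"
  unfolding H2_def using comm_group.abelian_FactGroup[OF GG_comm B_sub_GG] .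
lemma H2_grp: "group (H2 Q D)" using H2_comm comm_group.axioms(2) by blast
lemma H2_carrier: "carrier (H2 Q D) = (\<lambda>f. BB #>\<^bsub>CC\<^esub> f) ` YY"
  unfolding H2_def carrier_FactGroup r_coset_upd' by simp
lemma H2_one: "\<one>\<^bsub>H2 Q D\<^esub> = BB" unfolding H2_def by simp
lemma H2_mult: assumes "f \<in> YY" "g \<in> YY"
  shows "(BB #>\<^bsub>CC\<^esub> f) \<otimes>\<^bsub>H2 Q D\<^esub> (BB #>\<^bsub>CC\<^esub> g) = BB #>\<^bsub>CC\<^esub> (f \<otimes>\<^bsub>CC\<^esub> g)"
  using normal.rcos_sum[OF B_normal, of f g] assms unfolding H2_def r_coset_upd' set_mult_upd' by simp
lemma H2_inv: assumes "f \<in> YY"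
  shows "inv\<^bsub>H2 Q D\<^esub> (BB #>\<^bsub>CC\<^esub> f) = BB #>\<^bsub>CC\<^esub> (inv\<^bsub>CC\<^esub> f)"
proof -
  have c: "BB #>\<^bsub>GG\<^esub> f \<in> carrier (GG Mod BB)" using assms by (simp add: carrier_FactGroup)
  have "inv\<^bsub>GG Mod BB\<^esub> (BB #>\<^bsub>GG\<^esub> f) = set_inv\<^bsub>GG\<^esub> (BB #>\<^bsub>GG\<^esub> f)" using normal.inv_FactGroup[OF B_normal c] .
  also have "\<dots> = BB #>\<^bsub>GG\<^esub> inv\<^bsub>GG\<^esub> f" using normal.rcos_inv[OF B_normal] assms by simp
  also have "inv\<^bsub>GG\<^esub> f = inv\<^bsub>CC\<^esub> f" using group.m_inv_consistent[OF C_grp Y_sub assms] .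
  finally show ?thesis unfolding H2_def r_coset_upd' .
qed

end

lemma r_coset_upd: "r_coset (G\<lparr>carrier := S\<rparr>) = r_coset G"
  by (auto simp: r_coset_def fun_eq_iff)
lemma set_mult_upd: "set_mult (G\<lparr>carrier := S\<rparr>) = set_mult G"
  by (simp add: set_mult_def fun_eq_iff)

locale cp = G: group G + D: comm_group D
  for G :: "('a, 'm) monoid_scheme" (structure) and D :: "('d, 'n) monoid_scheme" +
  fixes S A Z :: "'a set"
  assumes Ssub: "subgroup S G" and Asub: "subgroup A G" and AS: "A \<subseteq> S"
    and Acent: "\<And>a g. a \<in> A \<Longrightarrow> g \<in> carrier G \<Longrightarrow> a \<otimes> g = g \<otimes> a"
    and Zsub: "subgroup Z G" and ZA: "Z \<subseteq> A" and ZD: "Z \<subseteq> derived G S"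
begin

abbreviation "GS \<equiv> G\<lparr>carrier := S\<rparr>"
abbreviation "QA \<equiv> GS Mod A"
abbreviation "QZ \<equiv> GS Mod Z"

lemma Sc: "h \<in> S \<Longrightarrow> h \<in> carrier G" using subgroup.mem_carrier[OF Ssub] .
lemma Ac: "a \<in> A \<Longrightarrow> a \<in> carrier G" using subgroup.mem_carrier[OF Asub] .
lemma Zc: "z \<in> Z \<Longrightarrow> z \<in> carrier G" using subgroup.mem_carrier[OF Zsub] .

lemma central_normal: assumes "subgroup N G" "N \<subseteq> A" shows "N \<lhd> G"
proof (rule G.normalI[OF assms(1)])
  show "\<forall>x\<in>carrier G. N #> x = x <# N"
  proof (intro ballI equalityI subsetI)
    fix x y assume x: "x \<in> carrier G"
    { assume "y \<in> N #> x"
      then obtain h where "h \<in> N" "y = h \<otimes> x" unfolding r_coset_def by blast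
      then show "y \<in> x <# N" using Acent[of h x] x assms(2) unfolding l_coset_def by auto }
    { assume "y \<in> x <# N"
      then obtain h where "h \<in> N" "y = x \<otimes> h" unfolding l_coset_def by blast
      then show "y \<in> N #> x" using Acent[of h x] x assms(2) unfolding r_coset_def by force }
  qed
qed

lemma A_normal: "A \<lhd> G" using central_normal[OF Asub] by simp
lemma Z_normal: "Z \<lhd> G" using central_normal[OF Zsub ZA] .

lemma GS_group: "group GS" using G.subgroup_imp_group[OF Ssub] .
lemma A_normal_S: "A \<lhd> GS" using G.normal_restrict_supergroup[OF Ssub A_normal AS] .
lemma Z_normal_S: "Z \<lhd> GS" using G.normal_restrict_supergroup[OF Ssub Z_normal] ZA AS by blast

lemma QA_group: "group QA" using normal.factorgroup_is_group[OF A_normal_S] .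
lemma QZ_group: "group QZ" using normal.factorgroup_is_group[OF Z_normal_S] .

lemma QA_carrier: "carrier QA = (\<lambda>h. A #> h) ` S"
  by (simp add: carrier_FactGroup r_coset_upd)
lemma QZ_carrier: "carrier QZ = (\<lambda>h. Z #> h) ` S"
  by (simp add: carrier_FactGroup r_coset_upd)
lemma QA_mult: "x \<otimes>\<^bsub>QA\<^esub> y = x <#> y" by (simp add: set_mult_upd)
lemma QZ_mult: "x \<otimes>\<^bsub>QZ\<^esub> y = x <#> y" by (simp add: set_mult_upd)

lemma A_rcos_mult: "h1 \<in> S \<Longrightarrow> h2 \<in> S \<Longrightarrow> (A #> h1) <#> (A #> h2) = A #> (h1 \<otimes> h2)"
  using normal.rcos_sum[OF A_normal] Sc by blast
lemma Z_rcos_mult: "h1 \<in> S \<Longrightarrow> h2 \<in> S \<Longrightarrow> (Z #> h1) <#> (Z #> h2) = Z #> (h1 \<otimes> h2)"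
  using normal.rcos_sum[OF Z_normal] Sc by blast

lemma A_rcos_sub: "h \<in> S \<Longrightarrow> A #> h \<subseteq> S"
  using AS subgroup.m_closed[OF Ssub] by (auto simp: r_coset_def)

definition s :: "'a set \<Rightarrow> 'a" where "s C = (SOME h. h \<in> C)"

lemma s_prop: assumes h: "h \<in> S"
  shows "s (A #> h) \<in> A #> h" "s (A #> h) \<in> S" "A #> s (A #> h) = A #> h"
proof -
  have "h \<in> A #> h" using G.rcos_self[OF Sc[OF h] Asub] .
  then show 1: "s (A #> h) \<in> A #> h" unfolding s_def by (rule someI)
  then show "s (A #> h) \<in> S" using A_rcos_sub[OF h] by blast
  show "A #> s (A #> h) = A #> h" using G.repr_independence[OF 1 Sc[OF h] Asub] by simp
qed

lemma rcos_eq_A: "p \<in> carrier G \<Longrightarrow> q \<in> carrier G \<Longrightarrow> A #> p = A #> q \<Longrightarrow> p \<otimes> inv q \<in> A"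
  using subgroup.rcos_module_imp[OF Asub G.is_group, of q p] G.rcos_self[of p A] Asub by simp

definition u :: "'a \<Rightarrow> 'a" where "u h = h \<otimes> inv (s (A #> h))"

lemma u_A: "h \<in> S \<Longrightarrow> u h \<in> A"
  unfolding u_def using rcos_eq_A[of h "s (A #> h)"] s_prop Sc by metis

lemma u_s: "h \<in> S \<Longrightarrow> u h \<otimes> s (A #> h) = h"
  unfolding u_def using s_prop(2) Sc by (simp add: G.m_assoc)

definition a2 :: "'a set \<Rightarrow> 'a set \<Rightarrow> 'a" where "a2 x y = s x \<otimes> s y \<otimes> inv (s (x <#> y))"

lemma a2_A: assumes "h1 \<in> S" "h2 \<in> S" shows "a2 (A #> h1) (A #> h2) \<in> A"
proof -
  let ?x = "A #> h1" and ?y = "A #> h2"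
  have sx: "s ?x \<in> S" "A #> s ?x = ?x" and sy: "s ?y \<in> S" "A #> s ?y = ?y" using s_prop assms by auto
  have xy: "?x <#> ?y = A #> (h1 \<otimes> h2)" using A_rcos_mult assms by simp
  have h12: "h1 \<otimes> h2 \<in> S" using assms subgroup.m_closed[OF Ssub] by blast
  have "A #> (s ?x \<otimes> s ?y) = ?x <#> ?y" using A_rcos_mult[OF sx(1) sy(1)] sx sy by simp
  also have "\<dots> = A #> s (?x <#> ?y)" using xy s_prop[OF h12] by simp
  finally show ?thesis unfolding a2_def
    using rcos_eq_A Sc sx(1) sy(1) s_prop(2)[OF h12] xy G.m_closed by metis
qed

lemma key: assumes h: "h1 \<in> S" "h2 \<in> S"
  shows "u (h1 \<otimes> h2) = u h1 \<otimes> u h2 \<otimes> a2 (A #> h1) (A #> h2)"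
proof -
  let ?x = "A #> h1" and ?y = "A #> h2"
  have xy: "?x <#> ?y = A #> (h1 \<otimes> h2)" using A_rcos_mult h by simp
  have h12: "h1 \<otimes> h2 \<in> S" using h subgroup.m_closed[OF Ssub] by blast
  have c: "s ?x \<in> carrier G" "s ?y \<in> carrier G" "s (A #> (h1 \<otimes> h2)) \<in> carrier G"
    "u h1 \<in> carrier G" "u h2 \<in> carrier G" "h1 \<in> carrier G" "h2 \<in> carrier G"
    using s_prop Sc h h12 u_A Ac by auto
  have comm: "u h2 \<otimes> s ?x = s ?x \<otimes> u h2" using Acent[OF u_A[OF h(2)] c(1)] .
  have "u h1 \<otimes> u h2 \<otimes> a2 ?x ?y = u h1 \<otimes> (u h2 \<otimes> s ?x) \<otimes> (s ?y \<otimes> inv (s (A #> (h1 \<otimes> h2))))"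
    unfolding a2_def xy using c by (simp add: G.m_assoc)
  also have "\<dots> = (u h1 \<otimes> s ?x) \<otimes> (u h2 \<otimes> s ?y) \<otimes> inv (s (A #> (h1 \<otimes> h2)))"
    unfolding comm using c by (simp add: G.m_assoc)
  also have "\<dots> = h1 \<otimes> h2 \<otimes> inv (s (A #> (h1 \<otimes> h2)))" using u_s h by simp
  also have "\<dots> = u (h1 \<otimes> h2)" unfolding u_def ..
  finally show ?thesis by simp
qed


lemma QA_elem: "x \<in> carrier QA \<Longrightarrow> \<exists>h\<in>S. x = A #> h" using QA_carrier by auto
lemma QZ_elem: "x \<in> carrier QZ \<Longrightarrow> \<exists>h\<in>S. x = Z #> h" using QZ_carrier by auto
lemma QA_in: "h \<in> S \<Longrightarrow> A #> h \<in> carrier QA" using QA_carrier by auto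
lemma QZ_in: "h \<in> S \<Longrightarrow> Z #> h \<in> carrier QZ" using QZ_carrier by auto
lemma S_mult: "h1 \<in> S \<Longrightarrow> h2 \<in> S \<Longrightarrow> h1 \<otimes> h2 \<in> S" using subgroup.m_closed[OF Ssub] .

lemma a2_A': "x \<in> carrier QA \<Longrightarrow> y \<in> carrier QA \<Longrightarrow> a2 x y \<in> A"
  using QA_elem a2_A by metis

definition F :: "('a \<Rightarrow> 'd) \<Rightarrow> ('a set \<times> 'a set \<Rightarrow> 'd)" where
  "F th = (\<lambda>p\<in>carrier QA \<times> carrier QA. th (a2 (fst p) (snd p)))"
definition U :: "('a \<Rightarrow> 'd) \<Rightarrow> 'a \<Rightarrow> 'd" where "U th h = th (u h)"

context
  fixes th assumes th: "th \<in> hom (G\<lparr>carrier := A\<rparr>) D"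
begin

lemmas hr = hom_restr[OF G.is_group D.is_group Asub th]

lemma U_c: "h \<in> S \<Longrightarrow> U th h \<in> carrier D" unfolding U_def using hr(1) u_A by blast

lemma F_c: "x \<in> carrier QA \<Longrightarrow> y \<in> carrier QA \<Longrightarrow> F th (x, y) \<in> carrier D"
  unfolding F_def using hr(1) a2_A' by simp

lemma keyU: assumes h: "h1 \<in> S" "h2 \<in> S"
  shows "U th (h1 \<otimes> h2) = U th h1 \<otimes>\<^bsub>D\<^esub> U th h2 \<otimes>\<^bsub>D\<^esub> F th (A #> h1, A #> h2)"
proof -
  have "U th (h1 \<otimes> h2) = th (u h1 \<otimes> u h2 \<otimes> a2 (A #> h1) (A #> h2))" unfolding U_def using key[OF h] by simp
  also have "\<dots> = th (u h1) \<otimes>\<^bsub>D\<^esub> th (u h2) \<otimes>\<^bsub>D\<^esub> th (a2 (A #> h1) (A #> h2))"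
    using hr(2) u_A a2_A h subgroup.m_closed[OF Asub] by metis
  finally show ?thesis unfolding U_def F_def using QA_in h by simp
qed

lemma F_cochain: "F th \<in> carrier (cochain2 QA D)"
  unfolding cochain_carrier F_def using hr(1) a2_A' by auto

lemma F_cocycle: "F th \<in> cocycles2 QA D"
  unfolding cocycles2_def
proof (intro CollectI conjI ballI)
  show "F th \<in> carrier (cochain2 QA D)" by (rule F_cochain)
  fix x y z assume xyz: "x \<in> carrier QA" "y \<in> carrier QA" "z \<in> carrier QA"
  obtain h1 h2 h3 where h: "h1 \<in> S" "h2 \<in> S" "h3 \<in> S" "x = A #> h1" "y = A #> h2" "z = A #> h3"
    using QA_elem xyz by metis
  have xy: "x \<otimes>\<^bsub>QA\<^esub> y = A #> (h1 \<otimes> h2)" and yz: "y \<otimes>\<^bsub>QA\<^esub> z = A #> (h2 \<otimes> h3)"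
    using h A_rcos_mult QA_mult by auto
  have h12: "h1 \<otimes> h2 \<in> S" and h23: "h2 \<otimes> h3 \<in> S" using h S_mult by auto
  have c: "U th h1 \<in> carrier D" "U th h2 \<in> carrier D" "U th h3 \<in> carrier D"
    "F th (x, y) \<in> carrier D" "F th (y, z) \<in> carrier D" "F th (x \<otimes>\<^bsub>QA\<^esub> y, z) \<in> carrier D"
    "F th (x, y \<otimes>\<^bsub>QA\<^esub> z) \<in> carrier D"
    using U_c F_c h xyz xy yz QA_in h12 h23 by auto
  let ?P = "U th h1 \<otimes>\<^bsub>D\<^esub> U th h2 \<otimes>\<^bsub>D\<^esub> U th h3"
  have k1: "U th (h1 \<otimes> h2 \<otimes> h3) = U th (h1 \<otimes> h2) \<otimes>\<^bsub>D\<^esub> U th h3 \<otimes>\<^bsub>D\<^esub> F th (x \<otimes>\<^bsub>QA\<^esub> y, z)"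
    unfolding xy h(6) by (rule keyU[OF h12 h(3)])
  have k2: "U th (h1 \<otimes> h2) = U th h1 \<otimes>\<^bsub>D\<^esub> U th h2 \<otimes>\<^bsub>D\<^esub> F th (x, y)"
    unfolding h(4,5) by (rule keyU[OF h(1,2)])
  have k3: "U th (h1 \<otimes> (h2 \<otimes> h3)) = U th h1 \<otimes>\<^bsub>D\<^esub> U th (h2 \<otimes> h3) \<otimes>\<^bsub>D\<^esub> F th (x, y \<otimes>\<^bsub>QA\<^esub> z)"
    unfolding yz h(4) by (rule keyU[OF h(1) h23])
  have k4: "U th (h2 \<otimes> h3) = U th h2 \<otimes>\<^bsub>D\<^esub> U th h3 \<otimes>\<^bsub>D\<^esub> F th (y, z)"
    unfolding h(5,6) by (rule keyU[OF h(2,3)])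
  have as: "h1 \<otimes> h2 \<otimes> h3 = h1 \<otimes> (h2 \<otimes> h3)" using h(1-3) by (simp add: Sc G.m_assoc)
  have "U th (h1 \<otimes> h2 \<otimes> h3) = ?P \<otimes>\<^bsub>D\<^esub> (F th (x, y) \<otimes>\<^bsub>D\<^esub> F th (x \<otimes>\<^bsub>QA\<^esub> y, z))"
    unfolding k1 k2 using c by (simp add: D.m_ac)
  moreover have "U th (h1 \<otimes> h2 \<otimes> h3) = ?P \<otimes>\<^bsub>D\<^esub> (F th (y, z) \<otimes>\<^bsub>D\<^esub> F th (x, y \<otimes>\<^bsub>QA\<^esub> z))"
    unfolding as k3 k4 using c by (simp add: D.m_ac)
  ultimately have "?P \<otimes>\<^bsub>D\<^esub> (F th (x, y) \<otimes>\<^bsub>D\<^esub> F th (x \<otimes>\<^bsub>QA\<^esub> y, z)) = ?P \<otimes>\<^bsub>D\<^esub> (F th (y, z) \<otimes>\<^bsub>D\<^esub> F th (x, y \<otimes>\<^bsub>QA\<^esub> z))"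
    by (rule trans[OF sym])
  then have e: "F th (x, y) \<otimes>\<^bsub>D\<^esub> F th (x \<otimes>\<^bsub>QA\<^esub> y, z) = F th (y, z) \<otimes>\<^bsub>D\<^esub> F th (x, y \<otimes>\<^bsub>QA\<^esub> z)"
    using D.l_cancel[of ?P] c by simp
  have "F th (x \<otimes>\<^bsub>QA\<^esub> y, z) \<otimes>\<^bsub>D\<^esub> F th (x, y) = F th (x, y) \<otimes>\<^bsub>D\<^esub> F th (x \<otimes>\<^bsub>QA\<^esub> y, z)"
    by (rule D.m_comm[OF c(6) c(4)])
  then show "F th (y, z) \<otimes>\<^bsub>D\<^esub> F th (x, y \<otimes>\<^bsub>QA\<^esub> z) = F th (x \<otimes>\<^bsub>QA\<^esub> y, z) \<otimes>\<^bsub>D\<^esub> F th (x, y)"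
    using e by simp
qed

end

lemma F_cong: "(\<And>a. a \<in> A \<Longrightarrow> th1 a = th2 a) \<Longrightarrow> F th1 = F th2"
  unfolding F_def using a2_A' by (auto intro!: restrict_ext)

lemma prod_hom: assumes "th1 \<in> hom (G\<lparr>carrier := A\<rparr>) D" "th2 \<in> hom (G\<lparr>carrier := A\<rparr>) D"
  shows "(\<lambda>a. th1 a \<otimes>\<^bsub>D\<^esub> th2 a) \<in> hom (G\<lparr>carrier := A\<rparr>) D"
proof (rule homI)
  note h1 = hom_restr[OF G.is_group D.is_group Asub assms(1)]
  note h2 = hom_restr[OF G.is_group D.is_group Asub assms(2)]
  show "th1 x \<otimes>\<^bsub>D\<^esub> th2 x \<in> carrier D" if "x \<in> carrier (G\<lparr>carrier := A\<rparr>)" for x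
    using that h1(1) h2(1) by simp
  show "th1 (x \<otimes>\<^bsub>G\<lparr>carrier := A\<rparr>\<^esub> y) \<otimes>\<^bsub>D\<^esub> th2 (x \<otimes>\<^bsub>G\<lparr>carrier := A\<rparr>\<^esub> y) =
       th1 x \<otimes>\<^bsub>D\<^esub> th2 x \<otimes>\<^bsub>D\<^esub> (th1 y \<otimes>\<^bsub>D\<^esub> th2 y)"
    if "x \<in> carrier (G\<lparr>carrier := A\<rparr>)" "y \<in> carrier (G\<lparr>carrier := A\<rparr>)" for x y
    using that h1(1,2) h2(1,2) by (simp add: D.m_ac)
qed

lemma quot_hom: assumes "th1 \<in> hom (G\<lparr>carrier := A\<rparr>) D" "th2 \<in> hom (G\<lparr>carrier := A\<rparr>) D"
  shows "(\<lambda>a. th1 a \<otimes>\<^bsub>D\<^esub> inv\<^bsub>D\<^esub> th2 a) \<in> hom (G\<lparr>carrier := A\<rparr>) D"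
proof (rule homI)
  note h1 = hom_restr[OF G.is_group D.is_group Asub assms(1)]
  note h2 = hom_restr[OF G.is_group D.is_group Asub assms(2)]
  show "th1 x \<otimes>\<^bsub>D\<^esub> inv\<^bsub>D\<^esub> th2 x \<in> carrier D" if "x \<in> carrier (G\<lparr>carrier := A\<rparr>)" for x
    using that h1(1) h2(1) by simp
  show "th1 (x \<otimes>\<^bsub>G\<lparr>carrier := A\<rparr>\<^esub> y) \<otimes>\<^bsub>D\<^esub> inv\<^bsub>D\<^esub> th2 (x \<otimes>\<^bsub>G\<lparr>carrier := A\<rparr>\<^esub> y) =
       th1 x \<otimes>\<^bsub>D\<^esub> inv\<^bsub>D\<^esub> th2 x \<otimes>\<^bsub>D\<^esub> (th1 y \<otimes>\<^bsub>D\<^esub> inv\<^bsub>D\<^esub> th2 y)"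
    if "x \<in> carrier (G\<lparr>carrier := A\<rparr>)" "y \<in> carrier (G\<lparr>carrier := A\<rparr>)" for x y
    using that h1(1,2) h2(1,2) by (simp add: D.m_ac D.inv_mult)
qed

lemma F_mult: assumes "th1 \<in> hom (G\<lparr>carrier := A\<rparr>) D" "th2 \<in> hom (G\<lparr>carrier := A\<rparr>) D"
  shows "F (\<lambda>a. th1 a \<otimes>\<^bsub>D\<^esub> th2 a) = F th1 \<otimes>\<^bsub>cochain2 QA D\<^esub> F th2"
  unfolding F_def cochain_mult by (auto intro!: restrict_ext)


lemma AZ: "A <#> Z = A"
proof (intro equalityI subsetI)
  fix x assume "x \<in> A <#> Z"
  then obtain a z where "a \<in> A" "z \<in> Z" "x = a \<otimes> z" unfolding set_mult_def by blast
  then show "x \<in> A" using ZA subgroup.m_closed[OF Asub] by blast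
next
  fix x assume x: "x \<in> A"
  then have "x = x \<otimes> \<one>" using Ac by simp
  then show "x \<in> A <#> Z" unfolding set_mult_def using x subgroup.one_closed[OF Zsub] by blast
qed

lemma proj_Z: "h \<in> S \<Longrightarrow> coset_proj G A (Z #> h) = A #> h"
  unfolding coset_proj_def
  using G.setmult_rcos_assoc[of A Z h] subgroup.subset[OF Asub] subgroup.subset[OF Zsub] Sc AZ by simp

lemma proj_c: "X1 \<in> carrier QZ \<Longrightarrow> coset_proj G A X1 \<in> carrier QA"
  using QZ_elem proj_Z QA_in by metis

lemma proj_mult: assumes "X1 \<in> carrier QZ" "Y1 \<in> carrier QZ"
  shows "coset_proj G A (X1 \<otimes>\<^bsub>QZ\<^esub> Y1) = coset_proj G A X1 \<otimes>\<^bsub>QA\<^esub> coset_proj G A Y1"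
proof -
  obtain h1 h2 where h: "h1 \<in> S" "h2 \<in> S" "X1 = Z #> h1" "Y1 = Z #> h2" using QZ_elem assms by metis
  then show ?thesis using QZ_mult QA_mult Z_rcos_mult A_rcos_mult proj_Z S_mult by simp
qed

definition P :: "('a set \<times> 'a set \<Rightarrow> 'd) \<Rightarrow> ('a set \<times> 'a set \<Rightarrow> 'd)" where
  "P f = (\<lambda>p\<in>carrier QZ \<times> carrier QZ. f (coset_proj G A (fst p), coset_proj G A (snd p)))"

lemma P_hom: "P \<in> hom (cochain2 QA D) (cochain2 QZ D)"
proof (rule homI)
  fix f assume "f \<in> carrier (cochain2 QA D)"
  then show "P f \<in> carrier (cochain2 QZ D)" unfolding cochain_carrier P_def using proj_c by (auto simp: PiE_iff)
next
  fix f g assume f: "f \<in> carrier (cochain2 QA D)" and g: "g \<in> carrier (cochain2 QA D)"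
  show "P (f \<otimes>\<^bsub>cochain2 QA D\<^esub> g) = P f \<otimes>\<^bsub>cochain2 QZ D\<^esub> P g"
    unfolding P_def cochain_mult using proj_c by (auto intro!: restrict_ext)
qed

lemma P_cob: assumes g: "g \<in> carrier QA \<rightarrow> carrier D"
  shows "P (cob QA D g) = cob QZ D (\<lambda>X1. g (coset_proj G A X1))"
  unfolding P_def cob_def using proj_c proj_mult monoid.m_closed[OF group.is_monoid[OF QZ_group]] by (fastforce intro!: restrict_ext)

lemma P_B: "P ` coboundaries2 QA D \<subseteq> coboundaries2 QZ D"
proof
  fix y assume "y \<in> P ` coboundaries2 QA D"
  then obtain g where g: "g \<in> carrier QA \<rightarrow> carrier D" "y = P (cob QA D g)" unfolding coboundaries_cob by blast
  have "(\<lambda>X1. g (coset_proj G A X1)) \<in> carrier QZ \<rightarrow> carrier D" using g(1) proj_c by auto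
  then show "y \<in> coboundaries2 QZ D" unfolding coboundaries_cob g(2) P_cob[OF g(1)] by blast
qed

lemma infl: assumes f: "f \<in> carrier (cochain2 QA D)"
  shows "inflation (coset_proj G A) QZ D (coboundaries2 QA D #>\<^bsub>cochain2 QA D\<^esub> f)
       = coboundaries2 QZ D #>\<^bsub>cochain2 QZ D\<^esub> P f"
proof -
  have e: "(\<lambda>f. \<lambda>p\<in>carrier QZ \<times> carrier QZ. f (coset_proj G A (fst p), coset_proj G A (snd p))) = P"
    unfolding P_def by (rule ext) simp
  show ?thesis unfolding inflation_def e
    using gen_infl[OF comm_group.axioms(2)[OF cochain_comm_group[OF D.comm_group_axioms]]
        comm_group.axioms(2)[OF cochain_comm_group[OF D.comm_group_axioms]] P_hom
        coboundaries_subgroup(1)[OF QA_group D.comm_group_axioms]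
        coboundaries_subgroup(1)[OF QZ_group D.comm_group_axioms] P_B f] .
qed


lemma u_Z: assumes z: "z \<in> Z" and h: "h \<in> S" shows "u (z \<otimes> h) = z \<otimes> u h"
proof -
  have zA: "z \<in> A" using z ZA by blast
  have "A #> (z \<otimes> h) = (A #> z) #> h" using G.coset_mult_assoc[of A z h] subgroup.subset[OF Asub] Ac[OF zA] Sc[OF h] by simp
  also have "A #> z = A" using G.coset_join2[OF Ac[OF zA] Asub zA] .
  finally have e: "A #> (z \<otimes> h) = A #> h" .
  have "s (A #> h) \<in> carrier G" using s_prop(2)[OF h] Sc by blast
  then show ?thesis unfolding u_def e using Ac[OF zA] Sc[OF h] by (simp add: G.m_assoc)
qed

definition tZ :: "'a set \<Rightarrow> 'a" where "tZ C = (SOME h. h \<in> C)"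

lemma tZ_prop: assumes h: "h \<in> S" shows "\<exists>z\<in>Z. tZ (Z #> h) = z \<otimes> h"
proof -
  have "h \<in> Z #> h" using G.rcos_self[OF Sc[OF h] Zsub] .
  then have "tZ (Z #> h) \<in> Z #> h" unfolding tZ_def by (rule someI)
  then show ?thesis unfolding r_coset_def by blast
qed

context
  fixes th assumes th: "th \<in> hom (G\<lparr>carrier := A\<rparr>) D"
begin

lemmas hr2 = hom_restr[OF G.is_group D.is_group Asub th]

lemma U_Z: assumes z: "z \<in> Z" and h: "h \<in> S" and triv: "\<forall>z\<in>Z. th z = \<one>\<^bsub>D\<^esub>"
  shows "U th (z \<otimes> h) = U th h"
proof -
  have zA: "z \<in> A" using z ZA by blast
  have "U th (z \<otimes> h) = th z \<otimes>\<^bsub>D\<^esub> th (u h)" unfolding U_def u_Z[OF z h] using hr2(2)[OF zA u_A[OF h]] .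
  then show ?thesis unfolding U_def using triv z hr2(1)[OF u_A[OF h]] by simp
qed

lemma c1: assumes triv: "\<forall>z\<in>Z. th z = \<one>\<^bsub>D\<^esub>"
  shows "P (F th) \<in> coboundaries2 QZ D"
proof -
  define g where "g X1 = inv\<^bsub>D\<^esub> (U th (tZ X1))" for X1
  have gU: "g (Z #> h) = inv\<^bsub>D\<^esub> (U th h)" if h: "h \<in> S" for h
  proof -
    obtain z where "z \<in> Z" "tZ (Z #> h) = z \<otimes> h" using tZ_prop[OF h] by blast
    then show ?thesis unfolding g_def using U_Z[OF _ h triv] by simp
  qed
  have gc: "g \<in> carrier QZ \<rightarrow> carrier D"
  proof
    fix X1 assume "X1 \<in> carrier QZ"
    then obtain h where "h \<in> S" "X1 = Z #> h" using QZ_elem by blast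
    then show "g X1 \<in> carrier D" using gU U_c[OF th] by simp
  qed
  have "P (F th) = cob QZ D g"
    unfolding P_def cob_def
  proof (rule restrict_ext)
    fix p assume p: "p \<in> carrier QZ \<times> carrier QZ"
    then obtain h1 h2 where h: "h1 \<in> S" "h2 \<in> S" "fst p = Z #> h1" "snd p = Z #> h2"
      using QZ_elem by (metis mem_Times_iff)
    have m: "fst p \<otimes>\<^bsub>QZ\<^esub> snd p = Z #> (h1 \<otimes> h2)" using h QZ_mult Z_rcos_mult by simp
    have c: "U th h1 \<in> carrier D" "U th h2 \<in> carrier D" "F th (A #> h1, A #> h2) \<in> carrier D"
      using U_c[OF th] F_c[OF th] h QA_in by auto
    have k: "U th (h1 \<otimes> h2) = U th h1 \<otimes>\<^bsub>D\<^esub> U th h2 \<otimes>\<^bsub>D\<^esub> F th (A #> h1, A #> h2)"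
      by (rule keyU[OF th h(1,2)])
    have "F th (coset_proj G A (fst p), coset_proj G A (snd p)) = F th (A #> h1, A #> h2)"
      using h proj_Z by simp
    also have "\<dots> = g (fst p) \<otimes>\<^bsub>D\<^esub> g (snd p) \<otimes>\<^bsub>D\<^esub> inv\<^bsub>D\<^esub> (g (fst p \<otimes>\<^bsub>QZ\<^esub> snd p))"
      unfolding h(3,4) QZ_mult Z_rcos_mult[OF h(1,2)] gU[OF h(1)] gU[OF h(2)] gU[OF S_mult[OF h(1,2)]] k
      using c by (simp add: D.m_ac D.inv_mult D.inv_cancels)
    finally show "F th (coset_proj G A (fst p), coset_proj G A (snd p)) =
       g (fst p) \<otimes>\<^bsub>D\<^esub> g (snd p) \<otimes>\<^bsub>D\<^esub> inv\<^bsub>D\<^esub> (g (fst p \<otimes>\<^bsub>QZ\<^esub> snd p))" .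
  qed
  then show ?thesis unfolding coboundaries_cob using gc by blast
qed

lemma c2: assumes B: "P (F th) \<in> coboundaries2 QZ D"
  shows "\<forall>z\<in>Z. th z = \<one>\<^bsub>D\<^esub>"
proof -
  obtain g where gc: "g \<in> carrier QZ \<rightarrow> carrier D" and ge: "P (F th) = cob QZ D g"
    using B unfolding coboundaries_cob by blast
  define Psi where "Psi h = U th h \<otimes>\<^bsub>D\<^esub> g (Z #> h)" for h
  have gcZ: "g (Z #> h) \<in> carrier D" if "h \<in> S" for h using gc QZ_in that by blast
  have Psi_c: "Psi h \<in> carrier D" if "h \<in> S" for h unfolding Psi_def using that gcZ U_c[OF th] by simp
  have Psi_mult: "Psi (h1 \<otimes> h2) = Psi h1 \<otimes>\<^bsub>D\<^esub> Psi h2" if h: "h1 \<in> S" "h2 \<in> S" for h1 h2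
  proof -
    have "F th (A #> h1, A #> h2) = P (F th) (Z #> h1, Z #> h2)"
      unfolding P_def using h QZ_in proj_Z by simp
    also have "\<dots> = g (Z #> h1) \<otimes>\<^bsub>D\<^esub> g (Z #> h2) \<otimes>\<^bsub>D\<^esub> inv\<^bsub>D\<^esub> g (Z #> (h1 \<otimes> h2))"
      unfolding ge cob_def using h QZ_in QZ_mult Z_rcos_mult by simp
    finally have Fe: "F th (A #> h1, A #> h2) = g (Z #> h1) \<otimes>\<^bsub>D\<^esub> g (Z #> h2) \<otimes>\<^bsub>D\<^esub> inv\<^bsub>D\<^esub> g (Z #> (h1 \<otimes> h2))" .
    have c: "U th h1 \<in> carrier D" "U th h2 \<in> carrier D" "g (Z #> h1) \<in> carrier D" "g (Z #> h2) \<in> carrier D"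
      "g (Z #> (h1 \<otimes> h2)) \<in> carrier D" using U_c[OF th] gcZ h S_mult by auto
    show ?thesis unfolding Psi_def keyU[OF th h] Fe
      using c by (simp add: D.m_ac D.inv_cancel_lc D.inv_cancel_lc2)
  qed
  have Psi_hom: "Psi \<in> hom (G\<lparr>carrier := S\<rparr>) D"
    by (rule homI) (use Psi_c Psi_mult in auto)
  note hp = hom_restr[OF G.is_group D.is_group Ssub Psi_hom]
  define K where "K = {h \<in> S. Psi h = \<one>\<^bsub>D\<^esub>}"
  have Ksub: "subgroup K G"
  proof (rule G.subgroupI)
    show "K \<subseteq> carrier G" unfolding K_def using Sc by blast
    show "K \<noteq> {}" unfolding K_def using hp(3) subgroup.one_closed[OF Ssub] by blast
    show "inv a \<in> K" if "a \<in> K" for a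
      using that hp(4) subgroup.m_inv_closed[OF Ssub] unfolding K_def by auto
    show "a \<otimes> b \<in> K" if "a \<in> K" "b \<in> K" for a b
      using that hp(2) subgroup.m_closed[OF Ssub] unfolding K_def by auto
  qed
  have "derived_set G S \<subseteq> K"
  proof
    fix x assume "x \<in> derived_set G S"
    then obtain h1 h2 where h: "h1 \<in> S" "h2 \<in> S" "x = h1 \<otimes> h2 \<otimes> inv h1 \<otimes> inv h2" by blast
    have i: "inv h1 \<in> S" "inv h2 \<in> S" using h subgroup.m_inv_closed[OF Ssub] by auto
    have "Psi x = Psi h1 \<otimes>\<^bsub>D\<^esub> Psi h2 \<otimes>\<^bsub>D\<^esub> inv\<^bsub>D\<^esub> Psi h1 \<otimes>\<^bsub>D\<^esub> inv\<^bsub>D\<^esub> Psi h2"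
      unfolding h(3) using h i S_mult hp(2,4) by simp
    also have "\<dots> = \<one>\<^bsub>D\<^esub>" using Psi_c[OF h(1)] Psi_c[OF h(2)] by (simp add: D.m_ac D.inv_cancels)
    finally show "x \<in> K" unfolding K_def using h i S_mult by simp
  qed
  then have "derived G S \<subseteq> K" unfolding derived_def using G.generate_subgroup_incl Ksub by blast
  then have ZK: "Z \<subseteq> K" using ZD by blast
  show ?thesis
  proof
    fix z assume z: "z \<in> Z"
    have zA: "z \<in> A" using z ZA by blast
    have one: "\<one> \<in> S" using subgroup.one_closed[OF Ssub] .
    have Zz: "Z #> z = Z #> \<one>" using G.coset_join2[OF Zc[OF z] Zsub z] G.coset_mult_one subgroup.subset[OF Zsub] by simp
    have uz: "u z = z \<otimes> u \<one>" using u_Z[OF z one] Zc[OF z] by simp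
    have "Psi z = th z \<otimes>\<^bsub>D\<^esub> Psi \<one>"
      unfolding Psi_def U_def uz Zz using hr2(2)[OF zA u_A[OF one]] hr2(1)[OF zA] hr2(1)[OF u_A[OF one]] gcZ[OF one]
      by (simp add: D.m_assoc)
    also have "Psi \<one> = \<one>\<^bsub>D\<^esub>" using hp(3) .
    finally have "Psi z = th z" using hr2(1)[OF zA] by simp
    moreover have "Psi z = \<one>\<^bsub>D\<^esub>" using ZK z unfolding K_def by blast
    ultimately show "th z = \<one>\<^bsub>D\<^esub>" by simp
  qed
qed

end


end

sublocale cp \<subseteq> hA: hloc "G\<lparr>carrier := S\<rparr> Mod A" D
  using QA_group D.comm_group_axioms by (simp add: hloc_def)
sublocale cp \<subseteq> hZ: hloc "G\<lparr>carrier := S\<rparr> Mod Z" D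
  using QZ_group D.comm_group_axioms by (simp add: hloc_def)

context cp begin

abbreviation "LL \<equiv> infl_kernel G S A Z D"

lemma P_one: "P \<one>\<^bsub>cochain2 QA D\<^esub> = \<one>\<^bsub>cochain2 QZ D\<^esub>"
  using group_hom.hom_one[of "cochain2 QA D" "cochain2 QZ D" P] P_hom hA.C_grp hZ.C_grp
  by (simp add: group_hom_def group_hom_axioms_def)

lemma P_inv: "f \<in> carrier (cochain2 QA D) \<Longrightarrow> P (inv\<^bsub>cochain2 QA D\<^esub> f) = inv\<^bsub>cochain2 QZ D\<^esub> P f"
  using group_hom.hom_inv[of "cochain2 QA D" "cochain2 QZ D" P] P_hom hA.C_grp hZ.C_grp
  by (simp add: group_hom_def group_hom_axioms_def)

lemma P_mult: "f \<in> carrier (cochain2 QA D) \<Longrightarrow> g \<in> carrier (cochain2 QA D) \<Longrightarrow>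
    P (f \<otimes>\<^bsub>cochain2 QA D\<^esub> g) = P f \<otimes>\<^bsub>cochain2 QZ D\<^esub> P g"
  using P_hom by (simp add: hom_def)

lemma P_c: "f \<in> carrier (cochain2 QA D) \<Longrightarrow> P f \<in> carrier (cochain2 QZ D)"
  using P_hom by (auto simp: hom_def)

lemma Yc: "f \<in> cocycles2 QA D \<Longrightarrow> f \<in> carrier (cochain2 QA D)"
  using subgroup.mem_carrier[OF hA.Y_sub] .

lemma L_mem: assumes f: "f \<in> cocycles2 QA D"
  shows "coboundaries2 QA D #>\<^bsub>cochain2 QA D\<^esub> f \<in> LL \<longleftrightarrow> P f \<in> coboundaries2 QZ D"
proof -
  have cin: "coboundaries2 QA D #>\<^bsub>cochain2 QA D\<^esub> f \<in> carrier (H2 QA D)" unfolding hA.H2_carrier using f by (rule imageI)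
  have Pc: "P f \<in> carrier (cochain2 QZ D)" using P_c[OF Yc[OF f]] .
  have "coboundaries2 QZ D #>\<^bsub>cochain2 QZ D\<^esub> P f = coboundaries2 QZ D \<longleftrightarrow> P f \<in> coboundaries2 QZ D"
  proof
    assume e: "coboundaries2 QZ D #>\<^bsub>cochain2 QZ D\<^esub> P f = coboundaries2 QZ D"
    show "P f \<in> coboundaries2 QZ D" by (rule group.coset_join1[OF hZ.C_grp e Pc hZ.B_sub])
  next
    assume "P f \<in> coboundaries2 QZ D"
    then show "coboundaries2 QZ D #>\<^bsub>cochain2 QZ D\<^esub> P f = coboundaries2 QZ D"
      by (rule group.coset_join2[OF hZ.C_grp Pc hZ.B_sub])
  qed
  then show ?thesis unfolding infl_kernel_def using cin infl[OF Yc[OF f]] hZ.H2_one by simp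
qed

lemma L_sub: "subgroup LL (H2 QA D)"
proof (rule group.subgroupI[OF hA.H2_grp])
  show "LL \<subseteq> carrier (H2 QA D)" unfolding infl_kernel_def by blast
  have one: "\<one>\<^bsub>cochain2 QA D\<^esub> \<in> cocycles2 QA D" using subgroup.one_closed[OF hA.Y_sub] .
  have "coboundaries2 QA D #>\<^bsub>cochain2 QA D\<^esub> \<one>\<^bsub>cochain2 QA D\<^esub> \<in> LL"
    unfolding L_mem[OF one] P_one using subgroup.one_closed[OF hZ.B_sub] .
  then show "LL \<noteq> {}" by blast
next
  fix c assume c: "c \<in> LL"
  then obtain f where f: "f \<in> cocycles2 QA D" "c = coboundaries2 QA D #>\<^bsub>cochain2 QA D\<^esub> f"
    using hA.H2_carrier unfolding infl_kernel_def by blast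
  have Pf: "P f \<in> coboundaries2 QZ D" using L_mem[OF f(1)] c f(2) by simp
  have fi: "inv\<^bsub>cochain2 QA D\<^esub> f \<in> cocycles2 QA D" using subgroup.m_inv_closed[OF hA.Y_sub f(1)] .
  show "inv\<^bsub>H2 QA D\<^esub> c \<in> LL"
    unfolding f(2) hA.H2_inv[OF f(1)] L_mem[OF fi] P_inv[OF Yc[OF f(1)]]
    using subgroup.m_inv_closed[OF hZ.B_sub Pf] .
next
  fix c d assume c: "c \<in> LL" and d: "d \<in> LL"
  obtain f where f: "f \<in> cocycles2 QA D" "c = coboundaries2 QA D #>\<^bsub>cochain2 QA D\<^esub> f"
    using c hA.H2_carrier unfolding infl_kernel_def by blast
  obtain g where g: "g \<in> cocycles2 QA D" "d = coboundaries2 QA D #>\<^bsub>cochain2 QA D\<^esub> g"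
    using d hA.H2_carrier unfolding infl_kernel_def by blast
  have Pf: "P f \<in> coboundaries2 QZ D" using L_mem[OF f(1)] c f(2) by simp
  have Pg: "P g \<in> coboundaries2 QZ D" using L_mem[OF g(1)] d g(2) by simp
  have fg: "f \<otimes>\<^bsub>cochain2 QA D\<^esub> g \<in> cocycles2 QA D" using subgroup.m_closed[OF hA.Y_sub f(1) g(1)] .
  show "c \<otimes>\<^bsub>H2 QA D\<^esub> d \<in> LL"
    unfolding f(2) g(2) hA.H2_mult[OF f(1) g(1)] L_mem[OF fg] P_mult[OF Yc[OF f(1)] Yc[OF g(1)]]
    using subgroup.m_closed[OF hZ.B_sub Pf Pg] .
qed

definition T :: "('a \<Rightarrow> 'd) \<Rightarrow> ('a set \<times> 'a set \<Rightarrow> 'd) set" where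
  "T th = coboundaries2 QA D #>\<^bsub>cochain2 QA D\<^esub> F th"

lemma T_c: assumes "th \<in> hom (G\<lparr>carrier := A\<rparr>) D" shows "T th \<in> carrier (H2 QA D)"
  unfolding T_def hA.H2_carrier using F_cocycle[OF assms] by (rule imageI)

lemma T_mult: assumes "th1 \<in> hom (G\<lparr>carrier := A\<rparr>) D" "th2 \<in> hom (G\<lparr>carrier := A\<rparr>) D"
  shows "T (\<lambda>a. th1 a \<otimes>\<^bsub>D\<^esub> th2 a) = T th1 \<otimes>\<^bsub>H2 QA D\<^esub> T th2"
  unfolding T_def F_mult[OF assms] hA.H2_mult[OF F_cocycle[OF assms(1)] F_cocycle[OF assms(2)]] ..

lemma T_L: assumes "th \<in> hom (G\<lparr>carrier := A\<rparr>) D"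
  shows "T th \<in> LL \<longleftrightarrow> (\<forall>z\<in>Z. th z = \<one>\<^bsub>D\<^esub>)"
  unfolding T_def L_mem[OF F_cocycle[OF assms]] using c1[OF assms] c2[OF assms] by (intro iffI)

lemma T_cong: assumes "\<And>a. a \<in> A \<Longrightarrow> th1 a = th2 a" shows "T th1 = T th2"
proof -
  have "F th1 = F th2" using assms by (rule F_cong)
  then show ?thesis unfolding T_def by simp
qed


lemma L_normal: "LL \<lhd> H2 QA D" using comm_group.subgroup_imp_normal[OF hA.H2_comm L_sub] .

definition comp :: "('a \<Rightarrow> 'd) \<Rightarrow> ('a set \<times> 'a set \<Rightarrow> 'd) set set" where
  "comp th = LL #>\<^bsub>H2 QA D\<^esub> T th"

lemma comp_in: assumes "th \<in> hom (G\<lparr>carrier := A\<rparr>) D" shows "comp th \<in> carrier (H2 QA D Mod LL)"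
  unfolding comp_def carrier_FactGroup using T_c[OF assms] by (rule imageI)

lemma L_absorb: assumes x: "x \<in> carrier (H2 QA D)" and l: "l \<in> LL"
  shows "LL #>\<^bsub>H2 QA D\<^esub> (x \<otimes>\<^bsub>H2 QA D\<^esub> l) = LL #>\<^bsub>H2 QA D\<^esub> x"
proof -
  interpret H: comm_group "H2 QA D" by (rule hA.H2_comm)
  have lc: "l \<in> carrier (H2 QA D)" using subgroup.mem_carrier[OF L_sub l] .
  have "x \<otimes>\<^bsub>H2 QA D\<^esub> l = l \<otimes>\<^bsub>H2 QA D\<^esub> x" using H.m_comm[OF x lc] .
  then have "LL #>\<^bsub>H2 QA D\<^esub> (x \<otimes>\<^bsub>H2 QA D\<^esub> l) = (LL #>\<^bsub>H2 QA D\<^esub> l) #>\<^bsub>H2 QA D\<^esub> x"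
    using H.coset_mult_assoc[OF subgroup.subset[OF L_sub] lc x] by simp
  also have "LL #>\<^bsub>H2 QA D\<^esub> l = LL" using H.coset_join2[OF lc L_sub l] .
  finally show ?thesis .
qed

lemma comp_hom: assumes h1: "th1 \<in> hom (G\<lparr>carrier := A\<rparr>) D" and h2: "th2 \<in> hom (G\<lparr>carrier := A\<rparr>) D"
    and h3: "th3 \<in> hom (G\<lparr>carrier := A\<rparr>) D" and e: "\<And>z. z \<in> Z \<Longrightarrow> th3 z = th1 z \<otimes>\<^bsub>D\<^esub> th2 z"
  shows "comp th3 = comp th1 \<otimes>\<^bsub>H2 QA D Mod LL\<^esub> comp th2"
proof -
  note r1 = hom_restr[OF G.is_group D.is_group Asub h1]
  note r2 = hom_restr[OF G.is_group D.is_group Asub h2]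
  note r3 = hom_restr[OF G.is_group D.is_group Asub h3]
  define p where "p a = th1 a \<otimes>\<^bsub>D\<^esub> th2 a" for a
  have ph: "p \<in> hom (G\<lparr>carrier := A\<rparr>) D" unfolding p_def using prod_hom[OF h1 h2] .
  define q where "q a = th3 a \<otimes>\<^bsub>D\<^esub> inv\<^bsub>D\<^esub> p a" for a
  have qh: "q \<in> hom (G\<lparr>carrier := A\<rparr>) D" unfolding q_def using quot_hom[OF h3 ph] .
  note rp = hom_restr[OF G.is_group D.is_group Asub ph]
  have "T th3 = T (\<lambda>a. p a \<otimes>\<^bsub>D\<^esub> q a)"
  proof (rule T_cong)
    fix a assume a: "a \<in> A"
    show "th3 a = p a \<otimes>\<^bsub>D\<^esub> q a" unfolding q_def using r3(1)[OF a] rp(1)[OF a] by (simp add: D.inv_cancels)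
  qed
  also have "\<dots> = T p \<otimes>\<^bsub>H2 QA D\<^esub> T q" using T_mult[OF ph qh] .
  finally have t3: "T th3 = T p \<otimes>\<^bsub>H2 QA D\<^esub> T q" .
  have qL: "T q \<in> LL" unfolding T_L[OF qh]
  proof
    fix z assume z: "z \<in> Z"
    then have zA: "z \<in> A" using ZA by blast
    show "q z = \<one>\<^bsub>D\<^esub>" unfolding q_def p_def using e[OF z] r1(1)[OF zA] r2(1)[OF zA] by simp
  qed
  have "comp th3 = LL #>\<^bsub>H2 QA D\<^esub> T p" unfolding comp_def t3 using L_absorb[OF T_c[OF ph] qL] .
  also have "T p = T th1 \<otimes>\<^bsub>H2 QA D\<^esub> T th2" unfolding p_def using T_mult[OF h1 h2] .
  also have "LL #>\<^bsub>H2 QA D\<^esub> (T th1 \<otimes>\<^bsub>H2 QA D\<^esub> T th2) = comp th1 <#>\<^bsub>H2 QA D\<^esub> comp th2"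
    unfolding comp_def using normal.rcos_sum[OF L_normal T_c[OF h1] T_c[OF h2]] by simp
  finally show ?thesis by simp
qed

lemma comp_inj: assumes h1: "th1 \<in> hom (G\<lparr>carrier := A\<rparr>) D" and h2: "th2 \<in> hom (G\<lparr>carrier := A\<rparr>) D"
    and eq: "comp th1 = comp th2" and z: "z \<in> Z"
  shows "th1 z = th2 z"
proof -
  interpret H: comm_group "H2 QA D" by (rule hA.H2_comm)
  note r1 = hom_restr[OF G.is_group D.is_group Asub h1]
  note r2 = hom_restr[OF G.is_group D.is_group Asub h2]
  define q where "q a = th1 a \<otimes>\<^bsub>D\<^esub> inv\<^bsub>D\<^esub> th2 a" for a
  have qh: "q \<in> hom (G\<lparr>carrier := A\<rparr>) D" unfolding q_def using quot_hom[OF h1 h2] .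
  have "T th1 = T (\<lambda>a. th2 a \<otimes>\<^bsub>D\<^esub> q a)"
  proof (rule T_cong)
    fix a assume a: "a \<in> A"
    show "th1 a = th2 a \<otimes>\<^bsub>D\<^esub> q a" unfolding q_def using r1(1)[OF a] r2(1)[OF a] by (simp add: D.inv_cancels)
  qed
  also have "\<dots> = T th2 \<otimes>\<^bsub>H2 QA D\<^esub> T q" using T_mult[OF h2 qh] .
  finally have t1: "T th1 = T th2 \<otimes>\<^bsub>H2 QA D\<^esub> T q" .
  have c1: "T th1 \<in> carrier (H2 QA D)" and c2: "T th2 \<in> carrier (H2 QA D)" and cq: "T q \<in> carrier (H2 QA D)"
    using T_c h1 h2 qh by auto
  have "T th1 \<in> LL #>\<^bsub>H2 QA D\<^esub> T th2"
    using H.repr_independenceD[OF L_sub c1] eq unfolding comp_def by simp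
  then have "T th1 \<otimes>\<^bsub>H2 QA D\<^esub> inv\<^bsub>H2 QA D\<^esub> T th2 \<in> LL"
    using subgroup.rcos_module_imp[OF L_sub H.is_group c2] by blast
  moreover have "T th1 \<otimes>\<^bsub>H2 QA D\<^esub> inv\<^bsub>H2 QA D\<^esub> T th2 = T q"
    unfolding t1 using c2 cq by (simp add: H.m_ac H.inv_cancels)
  ultimately have "T q \<in> LL" by simp
  then have "q z = \<one>\<^bsub>D\<^esub>" using T_L[OF qh] z by blast
  then show ?thesis unfolding q_def using z ZA r1(1) r2(1) by (metis D.inv_closed D.inv_equality D.inv_inv D.m_comm subsetD)
qed

end

theorem theorem3p6:
  fixes G :: "('a, 'm) monoid_scheme" and D :: "('d, 'n) monoid_scheme"
    and H K :: "'a set"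
  assumes "group G"
    and "H \<lhd> G" and "K \<lhd> G"
    and "H <#>\<^bsub>G\<^esub> K = carrier G"
    and "\<forall>h\<in>H. \<forall>k\<in>K. h \<otimes>\<^bsub>G\<^esub> k = k \<otimes>\<^bsub>G\<^esub> h"
    and "comm_group D" and "divisible_group D"
  shows "let A = H \<inter> K; Z = derived G H \<inter> derived G K;
             L = infl_kernel G H A Z D; M = infl_kernel G K A Z D
         in \<exists>\<phi>. \<phi> \<in> hom (Hom_grp G Z D)
                     ((H2 (G\<lparr>carrier := H\<rparr> Mod A) D Mod L) \<times>\<times> (H2 (G\<lparr>carrier := K\<rparr> Mod A) D Mod M))
                \<and> inj_on \<phi> (carrier (Hom_grp G Z D))"
proof -
  interpret G: group G by fact
  interpret D: comm_group D by fact
  define A where "A = H \<inter> K"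
  define Z where "Z = derived G H \<inter> derived G K"
  have Hs: "subgroup H G" using assms(2) normal_imp_subgroup by blast
  have Ks: "subgroup K G" using assms(3) normal_imp_subgroup by blast
  have As: "subgroup A G" unfolding A_def using G.subgroups_Inter_pair[OF Hs Ks] .
  have Hc: "H \<subseteq> carrier G" and Kc: "K \<subseteq> carrier G" using Hs Ks subgroup.subset by auto
  have dH: "derived G H \<subseteq> H" using G.derived_incl[OF subset_refl Hs] .
  have dK: "derived G K \<subseteq> K" using G.derived_incl[OF subset_refl Ks] .
  have Zs: "subgroup Z G" unfolding Z_def
    using G.subgroups_Inter_pair[OF G.derived_is_subgroup[OF Hc] G.derived_is_subgroup[OF Kc]] .
  have ZA: "Z \<subseteq> A" unfolding Z_def A_def using dH dK by blast
  have Acent: "a \<otimes>\<^bsub>G\<^esub> g = g \<otimes>\<^bsub>G\<^esub> a" if a: "a \<in> A" and g: "g \<in> carrier G" for a g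
  proof -
    obtain h k where hk: "h \<in> H" "k \<in> K" "g = h \<otimes>\<^bsub>G\<^esub> k"
      using g assms(4) unfolding set_mult_def by blast
    have c: "a \<in> carrier G" "h \<in> carrier G" "k \<in> carrier G" using a hk Hc Kc A_def by auto
    have ah: "a \<otimes>\<^bsub>G\<^esub> h = h \<otimes>\<^bsub>G\<^esub> a" using assms(5) hk(1) a unfolding A_def by auto
    have ak: "a \<otimes>\<^bsub>G\<^esub> k = k \<otimes>\<^bsub>G\<^esub> a" using assms(5) hk(2) a unfolding A_def by auto
    have "a \<otimes>\<^bsub>G\<^esub> g = (a \<otimes>\<^bsub>G\<^esub> h) \<otimes>\<^bsub>G\<^esub> k" using hk(3) c by (simp add: G.m_assoc)
    also have "\<dots> = h \<otimes>\<^bsub>G\<^esub> (a \<otimes>\<^bsub>G\<^esub> k)" unfolding ah using c by (simp add: G.m_assoc)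
    also have "\<dots> = g \<otimes>\<^bsub>G\<^esub> a" unfolding ak hk(3) using c by (simp add: G.m_assoc)
    finally show ?thesis .
  qed
  have AH: "A \<subseteq> H" and AK: "A \<subseteq> K" unfolding A_def by auto
  have ZH: "Z \<subseteq> derived G H" and ZK: "Z \<subseteq> derived G K" unfolding Z_def by auto
  have Acent': "\<And>a g. a \<in> A \<Longrightarrow> g \<in> carrier G \<Longrightarrow> a \<otimes>\<^bsub>G\<^esub> g = g \<otimes>\<^bsub>G\<^esub> a" using Acent by blast
  interpret cH: cp G D H A Z
    unfolding cp_def cp_axioms_def using G.is_group D.comm_group_axioms Hs As AH Acent' Zs ZA ZH by blast
  interpret cK: cp G D K A Z
    unfolding cp_def cp_axioms_def using G.is_group D.comm_group_axioms Ks As AK Acent' Zs ZA ZK by blast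
  have Wc: "comm_group (G\<lparr>carrier := A\<rparr>)"
  proof -
    have "group (G\<lparr>carrier := A\<rparr>)" using G.subgroup_imp_group[OF As] .
    then show ?thesis
      by (rule group.group_comm_groupI) (use Acent subgroup.mem_carrier[OF As] in auto)
  qed
  have ZW: "subgroup Z (G\<lparr>carrier := A\<rparr>)" using G.subgroup_incl[OF Zs As ZA] .
  have ext_ex: "\<exists>psi. psi \<in> hom (G\<lparr>carrier := A\<rparr>) D \<and> (\<forall>z\<in>Z. psi z = chi z)"
    if chi: "chi \<in> hom (G\<lparr>carrier := Z\<rparr>) D" for chi
  proof -
    have "chi \<in> hom ((G\<lparr>carrier := A\<rparr>)\<lparr>carrier := Z\<rparr>) D" using chi by simp
    then show ?thesis using divisible_extend[OF Wc ZW assms(6,7)] by blast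
  qed
  define ext where "ext chi = (SOME psi. psi \<in> hom (G\<lparr>carrier := A\<rparr>) D \<and> (\<forall>z\<in>Z. psi z = chi z))" for chi
  have ext: "ext chi \<in> hom (G\<lparr>carrier := A\<rparr>) D" "\<forall>z\<in>Z. ext chi z = chi z"
    if "chi \<in> hom (G\<lparr>carrier := Z\<rparr>) D" for chi
    using someI_ex[OF ext_ex[OF that]] unfolding ext_def by blast+
  define phi where "phi chi = (cH.comp (ext chi), cK.comp (ext chi))" for chi
  have carr: "chi \<in> carrier (Hom_grp G Z D) \<longleftrightarrow> chi \<in> hom (G\<lparr>carrier := Z\<rparr>) D \<and> chi \<in> extensional Z" for chi
    unfolding Hom_grp_def by simp
  have mulH: "chi1 \<otimes>\<^bsub>Hom_grp G Z D\<^esub> chi2 = (\<lambda>x\<in>Z. chi1 x \<otimes>\<^bsub>D\<^esub> chi2 x)" for chi1 chi2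
    unfolding Hom_grp_def by simp
  have prodhom: "(\<lambda>x\<in>Z. chi1 x \<otimes>\<^bsub>D\<^esub> chi2 x) \<in> hom (G\<lparr>carrier := Z\<rparr>) D"
    if h1: "chi1 \<in> hom (G\<lparr>carrier := Z\<rparr>) D" and h2: "chi2 \<in> hom (G\<lparr>carrier := Z\<rparr>) D" for chi1 chi2
  proof (rule homI)
    note r1 = hom_restr[OF G.is_group D.is_group Zs h1]
    note r2 = hom_restr[OF G.is_group D.is_group Zs h2]
    show "(\<lambda>x\<in>Z. chi1 x \<otimes>\<^bsub>D\<^esub> chi2 x) x \<in> carrier D" if "x \<in> carrier (G\<lparr>carrier := Z\<rparr>)" for x
      using that r1(1) r2(1) by simp
    show "(\<lambda>x\<in>Z. chi1 x \<otimes>\<^bsub>D\<^esub> chi2 x) (x \<otimes>\<^bsub>G\<lparr>carrier := Z\<rparr>\<^esub> y) =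
        (\<lambda>x\<in>Z. chi1 x \<otimes>\<^bsub>D\<^esub> chi2 x) x \<otimes>\<^bsub>D\<^esub> (\<lambda>x\<in>Z. chi1 x \<otimes>\<^bsub>D\<^esub> chi2 x) y"
      if "x \<in> carrier (G\<lparr>carrier := Z\<rparr>)" "y \<in> carrier (G\<lparr>carrier := Z\<rparr>)" for x y
      using that r1(1,2) r2(1,2) subgroup.m_closed[OF Zs] by (simp add: D.m_ac)
  qed
  have hom: "phi \<in> hom (Hom_grp G Z D)
      ((H2 (G\<lparr>carrier := H\<rparr> Mod A) D Mod infl_kernel G H A Z D) \<times>\<times> (H2 (G\<lparr>carrier := K\<rparr> Mod A) D Mod infl_kernel G K A Z D))"
  proof (rule homI)
    fix chi assume "chi \<in> carrier (Hom_grp G Z D)"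
    then have "chi \<in> hom (G\<lparr>carrier := Z\<rparr>) D" using carr by blast
    then show "phi chi \<in> carrier ((H2 (G\<lparr>carrier := H\<rparr> Mod A) D Mod infl_kernel G H A Z D) \<times>\<times> (H2 (G\<lparr>carrier := K\<rparr> Mod A) D Mod infl_kernel G K A Z D))"
      unfolding phi_def using cH.comp_in cK.comp_in ext by simp
  next
    fix chi1 chi2 assume c1: "chi1 \<in> carrier (Hom_grp G Z D)" and c2: "chi2 \<in> carrier (Hom_grp G Z D)"
    have h1: "chi1 \<in> hom (G\<lparr>carrier := Z\<rparr>) D" and h2: "chi2 \<in> hom (G\<lparr>carrier := Z\<rparr>) D" using c1 c2 carr by auto
    have h3: "chi1 \<otimes>\<^bsub>Hom_grp G Z D\<^esub> chi2 \<in> hom (G\<lparr>carrier := Z\<rparr>) D" unfolding mulH using prodhom[OF h1 h2] .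
    have e: "ext (chi1 \<otimes>\<^bsub>Hom_grp G Z D\<^esub> chi2) z = ext chi1 z \<otimes>\<^bsub>D\<^esub> ext chi2 z" if z: "z \<in> Z" for z
      using ext(2)[OF h3] ext(2)[OF h1] ext(2)[OF h2] z unfolding mulH by simp
    show "phi (chi1 \<otimes>\<^bsub>Hom_grp G Z D\<^esub> chi2) = phi chi1 \<otimes>\<^bsub>(H2 (G\<lparr>carrier := H\<rparr> Mod A) D Mod infl_kernel G H A Z D) \<times>\<times> (H2 (G\<lparr>carrier := K\<rparr> Mod A) D Mod infl_kernel G K A Z D)\<^esub> phi chi2"
      unfolding phi_def mult_DirProd
      using cH.comp_hom[OF ext(1)[OF h1] ext(1)[OF h2] ext(1)[OF h3] e]
            cK.comp_hom[OF ext(1)[OF h1] ext(1)[OF h2] ext(1)[OF h3] e] by simp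
  qed
  have inj: "inj_on phi (carrier (Hom_grp G Z D))"
  proof (rule inj_onI)
    fix chi1 chi2 assume c1: "chi1 \<in> carrier (Hom_grp G Z D)" and c2: "chi2 \<in> carrier (Hom_grp G Z D)"
      and eq: "phi chi1 = phi chi2"
    have h1: "chi1 \<in> hom (G\<lparr>carrier := Z\<rparr>) D" "chi1 \<in> extensional Z"
      and h2: "chi2 \<in> hom (G\<lparr>carrier := Z\<rparr>) D" "chi2 \<in> extensional Z" using c1 c2 carr by auto
    have "cH.comp (ext chi1) = cH.comp (ext chi2)" using eq unfolding phi_def by simp
    then have "ext chi1 z = ext chi2 z" if "z \<in> Z" for z
      using cH.comp_inj[OF ext(1)[OF h1(1)] ext(1)[OF h2(1)]] that by blast
    then have "chi1 z = chi2 z" if "z \<in> Z" for z using ext(2)[OF h1(1)] ext(2)[OF h2(1)] that by metis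
    then show "chi1 = chi2" using h1(2) h2(2) by (rule extensionalityI[rotated 2]) auto
  qed
  show ?thesis unfolding Let_def A_def[symmetric] Z_def[symmetric] using hom inj by blast
qed

end
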